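(* Let $p>1$ be an integer and let $u^{(p)}$ be the infinite word over $\{L,S,M\}$ invariant under the substitution $\varphi_p$ defined by $\varphi_p(L)=L^pS$, $\varphi_p(S)=M$, $\varphi_p(M)=L^{p-1}S$. Then $u^{(p)}$ is $3$-balanced, and it is not $2$-balanced.
   Context: The unique fixed point of $\varphi_p$ is $u^{(p)}=\lim_{n\to\infty}\varphi_p^n(L)$. For a finite word $w$, $|w|$ is its length and $|w|_a$ the number of occurrences of the letter $a$. An infinite word $u$ over an alphabet $\mathcal A$ is $c$-balanced if for every letter $a\in\mathcal A$ and all pairs of factors $v,w$ of $u$ with $|v|=|w|$ one has $\left||v|_a-|w|_a\right|\le c$. *)

theory Defs
  imports Main
begin

datatype letter = L | S | M

fun phi :: "nat \<Rightarrow> letter \<Rightarrow> letter list" where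
  "phi p L = replicate p L @ [S]"
| "phi p S = [M]"
| "phi p M = replicate (p - 1) L @ [S]"

definition phi_word :: "nat \<Rightarrow> letter list \<Rightarrow> letter list" where
  "phi_word p w = concat (map (phi p) w)"

definition phi_iter :: "nat \<Rightarrow> nat \<Rightarrow> letter list" where
  "phi_iter p n = (phi_word p ^^ n) [L]"

text \<open>The fixed point u^(p) = lim phi_p^n(L), as an infinite word nat => letter:
  position i carries the letter that phi_p^n(L) eventually has at position i.\<close>
definition u :: "nat \<Rightarrow> nat \<Rightarrow> letter" where
  "u p i = (THE a. \<exists>N. \<forall>n\<ge>N. i < length (phi_iter p n) \<and> phi_iter p n ! i = a)"

definition factors :: "(nat \<Rightarrow> 'a) \<Rightarrow> 'a list set" where
  "factors w = {map w [i..<i + n] | i n. True}"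

definition balanced :: "nat \<Rightarrow> (nat \<Rightarrow> 'a) \<Rightarrow> bool" where
  "balanced c w \<longleftrightarrow> (\<forall>a v x. v \<in> factors w \<and> x \<in> factors w \<and> length v = length x \<longrightarrow>
      \<bar>int (count_list v a) - int (count_list x a)\<bar> \<le> int c)"

end

theory Submission
  imports Defs
begin

lemma phi_len_L[simp]: "length (phi p L) = p + 1" by simp
lemma phi_len_S[simp]: "length (phi p S) = 1" by simp
lemma phi_len_M: "p \<ge> 1 \<Longrightarrow> length (phi p M) = p" by simp

lemma phi_nonempty: "phi p c \<noteq> []" by (cases c) auto

lemma phi_iter_Suc: "phi_iter p (Suc n) = phi_word p (phi_iter p n)"
  by (simp add: phi_iter_def)

lemma phi_word_append: "phi_word p (xs @ ys) = phi_word p xs @ phi_word p ys"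
  by (simp add: phi_word_def)

lemma phi_iter_prefix_Suc:
  assumes "p \<ge> 1" shows "\<exists>zs. phi_iter p (Suc n) = phi_iter p n @ zs"
proof (induction n)
  case 0
  have "phi p L = L # (replicate (p - 1) L @ [S])" using assms
    by (cases p) auto
  then show ?case by (simp add: phi_iter_def phi_word_def)
next
  case (Suc n)
  then obtain zs where "phi_iter p (Suc n) = phi_iter p n @ zs" by auto
  then show ?case by (simp add: phi_iter_Suc phi_word_append)
qed

lemma phi_iter_prefix:
  assumes "p \<ge> 1" "n \<le> m" shows "\<exists>zs. phi_iter p m = phi_iter p n @ zs"
  using assms(2)
proof (induction m)
  case 0 then show ?case by simp
next
  case (Suc m)
  show ?case
  proof (cases "n = Suc m")
    case True then show ?thesis by simp
  next
    case False
    then have "n \<le> m" using Suc by simp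
    then obtain zs where "phi_iter p m = phi_iter p n @ zs" using Suc by blast
    moreover obtain zs' where "phi_iter p (Suc m) = phi_iter p m @ zs'"
      using phi_iter_prefix_Suc[OF assms(1), of m] by blast
    ultimately show ?thesis by auto
  qed
qed

lemma phi_iter_hd: "p \<ge> 1 \<Longrightarrow> \<exists>rest. phi_iter p n = L # rest"
  using phi_iter_prefix[of p 0 n] by (auto simp: phi_iter_def)

lemma length_phi_word_ge: "length (phi_word p w) \<ge> length w"
proof (induction w)
  case Nil then show ?case by (simp add: phi_word_def)
next
  case (Cons a w)
  have "length (phi p a) \<ge> 1" using phi_nonempty[of p a] by (cases "phi p a") auto
  then show ?case using Cons by (simp add: phi_word_def)
qed

lemma phi_iter_length: "p \<ge> 1 \<Longrightarrow> length (phi_iter p n) \<ge> Suc n"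
proof (induction n)
  case 0 then show ?case by (simp add: phi_iter_def)
next
  case (Suc n)
  obtain rest where r: "phi_iter p n = L # rest" using phi_iter_hd[OF Suc.prems] by blast
  have "length (phi_iter p (Suc n)) = p + 1 + length (phi_word p rest)"
    by (simp add: phi_iter_Suc r phi_word_def)
  moreover have "length (phi_word p rest) \<ge> length rest" by (rule length_phi_word_ge)
  ultimately show ?case using Suc r by simp
qed

lemma u_eq:
  assumes "p \<ge> 1" "i < length (phi_iter p n)"
  shows "u p i = phi_iter p n ! i"
  unfolding u_def
proof (rule the_equality)
  show "\<exists>N. \<forall>m\<ge>N. i < length (phi_iter p m) \<and> phi_iter p m ! i = phi_iter p n ! i"
  proof (intro exI allI impI)
    fix m assume "n \<le> m"
    then obtain zs where "phi_iter p m = phi_iter p n @ zs"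
      using phi_iter_prefix[OF assms(1)] by blast
    then show "i < length (phi_iter p m) \<and> phi_iter p m ! i = phi_iter p n ! i"
      using assms(2) by (simp add: nth_append)
  qed
next
  fix a assume "\<exists>N. \<forall>m\<ge>N. i < length (phi_iter p m) \<and> phi_iter p m ! i = a"
  then obtain N where N: "\<forall>m\<ge>N. i < length (phi_iter p m) \<and> phi_iter p m ! i = a" by blast
  obtain zs where "phi_iter p (max N n) = phi_iter p n @ zs"
    using phi_iter_prefix[OF assms(1), of n "max N n"] by auto
  then have "phi_iter p (max N n) ! i = phi_iter p n ! i" using assms(2) by (simp add: nth_append)
  then show "a = phi_iter p n ! i" using N by auto
qed

lemma u_exists_n: "p \<ge> 1 \<Longrightarrow> \<exists>n. i < length (phi_iter p n)"
  using phi_iter_length[of p i] by (intro exI[of _ i]) auto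

lemma u_0: "p \<ge> 1 \<Longrightarrow> u p 0 = L"
  using u_eq[of p 0 0] by (simp add: phi_iter_def)

lemma concat_map_nth:
  assumes "k < length w" "r < length (f (w ! k))"
  shows "(\<Sum>j<k. length (f (w ! j))) + r < length (concat (map f w)) \<and>
         concat (map f w) ! ((\<Sum>j<k. length (f (w ! j))) + r) = f (w ! k) ! r"
  using assms
proof (induction w arbitrary: k)
  case Nil then show ?case by simp
next
  case (Cons a w)
  show ?case
  proof (cases k)
    case 0 then show ?thesis using Cons by (simp add: nth_append)
  next
    case (Suc k')
    have IH: "(\<Sum>j<k'. length (f (w ! j))) + r < length (concat (map f w)) \<and>
         concat (map f w) ! ((\<Sum>j<k'. length (f (w ! j))) + r) = f (w ! k') ! r"
      using Cons Suc by simp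
    have sum: "(\<Sum>j<k. length (f ((a # w) ! j))) = length (f a) + (\<Sum>j<k'. length (f (w ! j)))"
      using sum.lessThan_Suc_shift[of "\<lambda>j. length (f ((a#w) ! j))" k'] Suc by simp
    show ?thesis unfolding sum using IH Suc by (simp add: nth_append add.assoc)
  qed
qed

definition Lam :: "nat \<Rightarrow> nat \<Rightarrow> nat" where
  "Lam p k = (\<Sum>j<k. length (phi p (u p j)))"

lemma Lam_0[simp]: "Lam p 0 = 0" by (simp add: Lam_def)
lemma Lam_Suc: "Lam p (Suc k) = Lam p k + length (phi p (u p k))" by (simp add: Lam_def)

lemma u_phi:
  assumes "p \<ge> 1" "r < length (phi p (u p k))"
  shows "u p (Lam p k + r) = phi p (u p k) ! r"
proof -
  obtain n where n: "k < length (phi_iter p n)" using u_exists_n[OF assms(1)] by blast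
  let ?w = "phi_iter p n"
  have uj: "\<And>j. j \<le> k \<Longrightarrow> u p j = ?w ! j" using u_eq[OF assms(1)] n by simp
  have L: "Lam p k = (\<Sum>j<k. length (phi p (?w ! j)))"
    unfolding Lam_def by (rule sum.cong) (auto simp: uj)
  have r': "r < length (phi p (?w ! k))" using assms(2) uj by simp
  from concat_map_nth[where f="phi p", OF n r']
  have "Lam p k + r < length (phi_iter p (Suc n)) \<and> phi_iter p (Suc n) ! (Lam p k + r) = phi p (?w ! k) ! r"
    by (simp add: L phi_iter_Suc phi_word_def)
  then show ?thesis using u_eq[OF assms(1), of "Lam p k + r" "Suc n"] uj[of k] by simp
qed


definition cnt :: "nat \<Rightarrow> letter \<Rightarrow> nat \<Rightarrow> nat" where
  "cnt p a i = (\<Sum>j<i. if u p j = a then 1 else 0)"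

lemma cnt_0[simp]: "cnt p a 0 = 0" by (simp add: cnt_def)

lemma count_list_replicate: "count_list (replicate n x) y = (if x = y then n else 0)"
  by (induction n) auto

lemma cnt_Suc: "cnt p a (Suc i) = cnt p a i + (if u p i = a then 1 else 0)"
  by (simp add: cnt_def)

lemma cnt_le: "cnt p a i \<le> i"
  by (induction i) (auto simp: cnt_Suc)

lemma cnt_mono: "i \<le> j \<Longrightarrow> cnt p a i \<le> cnt p a j"
  by (induction j) (auto simp: cnt_Suc le_Suc_eq)

lemma count_window: "i \<le> j \<Longrightarrow> count_list (map (u p) [i..<j]) a = cnt p a j - cnt p a i"
proof (induction j)
  case 0 then show ?case by (simp add: cnt_def)
next
  case (Suc j)
  show ?case
  proof (cases "i = Suc j")
    case True then show ?thesis by simp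
  next
    case False
    then have "i \<le> j" using Suc by simp
    moreover have "cnt p a i \<le> cnt p a j" using \<open>i \<le> j\<close>
      by (induction j) (auto simp: cnt_Suc le_Suc_eq)
    ultimately show ?thesis using Suc by (simp add: cnt_Suc)
  qed
qed

lemma decomp: "\<exists>k r. i = Lam p k + r \<and> r < length (phi p (u p k))"
proof (induction i)
  case 0 then show ?case using phi_nonempty[of p "u p 0"]
    by (intro exI[of _ 0] exI[of _ 0]) auto
next
  case (Suc i)
  then obtain k r where kr: "i = Lam p k + r" "r < length (phi p (u p k))" by blast
  show ?case
  proof (cases "Suc r < length (phi p (u p k))")
    case True then show ?thesis using kr by (intro exI[of _ k] exI[of _ "Suc r"]) auto
  next
    case False
    then have "Suc i = Lam p (Suc k) + 0" using kr by (simp add: Lam_Suc)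
    then show ?thesis using phi_nonempty[of p "u p (Suc k)"] by (intro exI[of _ "Suc k"] exI[of _ 0]) auto
  qed
qed

lemma Lam_mono: "k \<le> k' \<Longrightarrow> Lam p k \<le> Lam p k'"
  unfolding Lam_def by (rule sum_mono2) auto

lemma decomp_mono:
  assumes "Lam p k1 + r1 \<le> Lam p k2 + r2" "r2 < length (phi p (u p k2))"
  shows "k1 \<le> k2"
proof (rule ccontr)
  assume "\<not> k1 \<le> k2"
  then have "Suc k2 \<le> k1" by simp
  then have "Lam p (Suc k2) \<le> Lam p k1" by (rule Lam_mono)
  then show False using assms by (simp add: Lam_Suc)
qed

lemma len_ge1: "length (phi p c) \<ge> 1"
  using phi_nonempty[of p c] by (cases "phi p c") auto

lemma Lam_ge: "Lam p k \<ge> k"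
proof -
  have "Lam p k \<ge> (\<Sum>j<k. 1)" unfolding Lam_def by (rule sum_mono) (rule len_ge1)
  then show ?thesis by simp
qed

lemma Lam_gt: assumes "p \<ge> 1" "k \<ge> 1" shows "Lam p k > k"
proof -
  obtain k' where k: "k = Suc k'" using assms(2) by (cases k) auto
  have "Lam p k = length (phi p (u p 0)) + (\<Sum>j<k'. length (phi p (u p (Suc j))))"
    unfolding Lam_def k sum.lessThan_Suc_shift by simp
  moreover have "(\<Sum>j<k'. length (phi p (u p (Suc j)))) \<ge> (\<Sum>j<k'. 1)" by (rule sum_mono) (rule len_ge1)
  moreover have "length (phi p (u p 0)) = p + 1" using u_0[OF assms(1)] by simp
  ultimately show ?thesis using assms k by simp
qed

lemma cnt_inner:
  assumes "p \<ge> 1" "r \<le> length (phi p (u p k))"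
  shows "cnt p a (Lam p k + r) = cnt p a (Lam p k) + count_list (take r (phi p (u p k))) a"
  using assms(2)
proof (induction r)
  case 0 then show ?case by simp
next
  case (Suc r)
  then have r: "r < length (phi p (u p k))" by simp
  have "take (Suc r) (phi p (u p k)) = take r (phi p (u p k)) @ [phi p (u p k) ! r]"
    using r by (simp add: take_Suc_conv_app_nth)
  then show ?case using Suc u_phi[OF assms(1) r] by (simp add: cnt_Suc)
qed

lemma cnt_Lam:
  assumes "p \<ge> 1"
  shows "cnt p a (Lam p k) = (\<Sum>j<k. count_list (phi p (u p j)) a)"
proof (induction k)
  case 0 then show ?case by (simp add: cnt_def)
next
  case (Suc k)
  have "cnt p a (Lam p (Suc k)) = cnt p a (Lam p k + length (phi p (u p k)))" by (simp add: Lam_Suc)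
  also have "\<dots> = cnt p a (Lam p k) + count_list (phi p (u p k)) a"
    using cnt_inner[OF assms, of "length (phi p (u p k))" k a] by simp
  finally show ?case using Suc by simp
qed

lemma count_take_phi:
  assumes "p \<ge> 1" "r < length (phi p c)" "a \<noteq> L"
  shows "count_list (take r (phi p c)) a = 0"
proof -
  have "take r (phi p c) = replicate r L"
    using assms(1,2) by (cases c) (auto simp: take_append)
  then show ?thesis using assms(3) by (simp add: count_list_replicate)
qed

lemma count_phi_S: "count_list (phi p c) S = (if c = S then 0 else 1)"
  by (cases c) (auto simp: count_list_replicate)
lemma count_phi_M: "count_list (phi p c) M = (if c = S then 1 else 0)"
  by (cases c) (auto simp: count_list_replicate)

lemma cS_Lam: "p \<ge> 1 \<Longrightarrow> cnt p S (Lam p k) + cnt p S k = k"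
proof (induction k)
  case 0 then show ?case by (simp add: cnt_def)
next
  case (Suc k)
  then show ?case using cnt_Lam[OF Suc.prems, of S] cnt_Lam[OF Suc.prems, of S "Suc k"]
    by (simp add: count_phi_S cnt_Suc)
qed

lemma cM_Lam: "p \<ge> 1 \<Longrightarrow> cnt p M (Lam p k) = cnt p S k"
proof (induction k)
  case 0 then show ?case by (simp add: cnt_def)
next
  case (Suc k)
  then show ?case using cnt_Lam[OF Suc.prems, of M] cnt_Lam[OF Suc.prems, of M "Suc k"]
    by (simp add: count_phi_M cnt_Suc)
qed

lemma Lam_formula: "p \<ge> 1 \<Longrightarrow> int (Lam p k) = (int p + 1) * int k - int p * int (cnt p S k) - int (cnt p M k)"
proof (induction k)
  case 0 then show ?case by (simp add: cnt_def)
next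
  case (Suc k)
  show ?case
  proof (cases "u p k")
    case L then show ?thesis using Suc by (simp add: Lam_Suc cnt_Suc algebra_simps)
  next
    case S then show ?thesis using Suc by (simp add: Lam_Suc cnt_Suc algebra_simps)
  next
    case M then show ?thesis using Suc by (simp add: Lam_Suc cnt_Suc algebra_simps)
  qed
qed

lemma cS_top:
  assumes "p \<ge> 1" "r < length (phi p (u p k))"
  shows "int (cnt p S (Lam p k + r)) = int k - int (cnt p S k)"
  using cnt_inner[OF assms(1) less_imp_le[OF assms(2)], of S] count_take_phi[OF assms(1,2)] cS_Lam[OF assms(1), of k]
  by simp

lemma cM_top:
  assumes "p \<ge> 1" "r < length (phi p (u p k))"
  shows "cnt p M (Lam p k + r) = cnt p S k"
  using cnt_inner[OF assms(1) less_imp_le[OF assms(2)], of M] count_take_phi[OF assms(1,2)] cM_Lam[OF assms(1), of k]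
  by simp

fun bl :: "letter \<Rightarrow> letter" where "bl L = S" | "bl S = M" | "bl M = S"

lemma phi_nth:
  assumes "p \<ge> 1" "r < length (phi p c)"
  shows "phi p c ! r = (if r < length (phi p c) - 1 then L else bl c)"
  using assms by (cases c) (auto simp: nth_append)

lemma u_top:
  assumes "p \<ge> 1" "r < length (phi p (u p k))"
  shows "u p (Lam p k + r) = (if r < length (phi p (u p k)) - 1 then L else bl (u p k))"
  using u_phi[OF assms] phi_nth[OF assms] by simp


definition cS :: "nat \<Rightarrow> nat \<Rightarrow> int" where "cS p i = int (cnt p S i)"
definition cM :: "nat \<Rightarrow> nat \<Rightarrow> int" where "cM p i = int (cnt p M i)"

type_synonym state = "int \<times> int \<times> int \<times> letter \<times> letter"

definition st :: "nat \<Rightarrow> nat \<Rightarrow> nat \<Rightarrow> nat \<Rightarrow> nat \<Rightarrow> state" where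
  "st p i1 i2 i3 i4 = ((int i2 - int i1) - (int i4 - int i3),
      (cS p i2 - cS p i1) - (cS p i4 - cS p i3),
      (cM p i2 - cM p i1) - (cM p i4 - cM p i3), u p i1, u p i3)"

definition ell :: "nat \<Rightarrow> letter \<Rightarrow> int" where "ell p c = int (length (phi p c))"

definition lt :: "nat \<Rightarrow> nat \<Rightarrow> letter \<Rightarrow> letter" where
  "lt p r c = (if r < length (phi p c) - 1 then L else bl c)"

fun TR :: "nat \<Rightarrow> state \<Rightarrow> state \<Rightarrow> bool" where
  "TR p (d', s', m', c1, c3) (d, s, m, a1, a3) \<longleftrightarrow> (\<exists>r1 r2 r3 r4 :: nat.
      r1 < length (phi p c1) \<and> r3 < length (phi p c3) \<and> r2 \<le> p \<and> r4 \<le> p \<and>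
      d = (int p + 1) * d' - int p * s' - m' + int r2 - int r1 - int r4 + int r3 \<and>
      s = d' - s' \<and> m = s' \<and> a1 = lt p r1 c1 \<and> a3 = lt p r3 c3)"

lemma len_le: "p \<ge> 1 \<Longrightarrow> length (phi p c) \<le> p + 1"
  by (cases c) auto

lemma Lam_diff:
  assumes "p \<ge> 1"
  shows "int (Lam p b) - int (Lam p a) = (int p + 1) * (int b - int a) - int p * (cS p b - cS p a) - (cM p b - cM p a)"
  using Lam_formula[OF assms, of a] Lam_formula[OF assms, of b] by (simp add: cS_def cM_def algebra_simps)

lemma trans_lemma:
  assumes p1: "p \<ge> 1"
    and d1: "i1 = Lam p k1 + r1" "r1 < length (phi p (u p k1))"
    and d2: "i2 = Lam p k2 + r2" "r2 < length (phi p (u p k2))"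
    and d3: "i3 = Lam p k3 + r3" "r3 < length (phi p (u p k3))"
    and d4: "i4 = Lam p k4 + r4" "r4 < length (phi p (u p k4))"
  shows "TR p (st p k1 k2 k3 k4) (st p i1 i2 i3 i4)"
proof -
  have S: "\<And>i k r. i = Lam p k + r \<Longrightarrow> r < length (phi p (u p k)) \<Longrightarrow> cS p i = int k - cS p k"
    using cS_top[OF p1] by (simp add: cS_def)
  have Mm: "\<And>i k r. i = Lam p k + r \<Longrightarrow> r < length (phi p (u p k)) \<Longrightarrow> cM p i = cS p k"
    using cM_top[OF p1] by (simp add: cS_def cM_def)
  have U: "\<And>i k r. i = Lam p k + r \<Longrightarrow> r < length (phi p (u p k)) \<Longrightarrow> u p i = lt p r (u p k)"
    using u_top[OF p1] by (simp add: lt_def)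
  have r2: "r2 \<le> p" using d2(2) len_le[OF p1, of "u p k2"] by simp
  have r4: "r4 \<le> p" using d4(2) len_le[OF p1, of "u p k4"] by simp
  have D: "(int i2 - int i1) - (int i4 - int i3) =
     (int p + 1) * ((int k2 - int k1) - (int k4 - int k3)) - int p * ((cS p k2 - cS p k1) - (cS p k4 - cS p k3))
      - ((cM p k2 - cM p k1) - (cM p k4 - cM p k3)) + int r2 - int r1 - int r4 + int r3"
    using Lam_diff[OF p1, of k2 k1] Lam_diff[OF p1, of k4 k3] d1 d2 d3 d4 by (simp add: algebra_simps)
  show ?thesis unfolding st_def TR.simps
    apply (rule exI[of _ r1], rule exI[of _ r2], rule exI[of _ r3], rule exI[of _ r4])
    using d1 d2 d3 d4 r2 r4 D S[OF d1] S[OF d2] S[OF d3] S[OF d4] Mm[OF d1] Mm[OF d2] Mm[OF d3] Mm[OF d4]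
      U[OF d1] U[OF d3]
    by (simp add: algebra_simps)
qed

lemma st_lform:
  assumes "p \<ge> 1"
  shows "(case st p a b c d of (d0, s0, m0, _, _) \<Rightarrow> (int p + 1) * d0 - int p * s0 - m0)
         = (int (Lam p b) - int (Lam p a)) - (int (Lam p d) - int (Lam p c))"
  using Lam_diff[OF assms, of b a] Lam_diff[OF assms, of d c] by (simp add: st_def algebra_simps)

locale inv_sys =
  fixes p :: nat and E :: int and Inv :: "state \<Rightarrow> bool"
  assumes p1: "p \<ge> 1"
    and E0: "E \<ge> 0"
    and closure: "\<And>t' t. Inv t' \<Longrightarrow> TR p t' t \<Longrightarrow> \<bar>fst t\<bar> \<le> E \<Longrightarrow> \<bar>fst t'\<bar> \<le> E \<Longrightarrow> Inv t"
    and bnd_pos: "\<And>s m c1 c3. Inv (E, s, m, c1, c3) \<Longrightarrow>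
        (int p + 1) * E - int p * s - m + 1 - (ell p c1 - 1) - int p > E"
    and bnd_neg: "\<And>s m c1 c3. Inv (-E, s, m, c1, c3) \<Longrightarrow>
        -(int p + 1) * E - int p * s - m - 1 + (ell p c3 - 1) + int p < -E"
    and base: "Inv (0, 0, 0, L, L)"
begin

lemma main_aux:
  "\<forall>i1 i2 i3 i4. i2 + i4 = n \<longrightarrow> i1 \<le> i2 \<longrightarrow> i3 \<le> i4 \<longrightarrow> \<bar>fst (st p i1 i2 i3 i4)\<bar> \<le> E \<longrightarrow>
     Inv (st p i1 i2 i3 i4) \<and>
     (\<forall>k1 r1 k2 r2 k3 r3 k4 r4. i1 = Lam p k1 + r1 \<longrightarrow> r1 < length (phi p (u p k1)) \<longrightarrow>
        i2 = Lam p k2 + r2 \<longrightarrow> r2 < length (phi p (u p k2)) \<longrightarrow>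
        i3 = Lam p k3 + r3 \<longrightarrow> r3 < length (phi p (u p k3)) \<longrightarrow>
        i4 = Lam p k4 + r4 \<longrightarrow> r4 < length (phi p (u p k4)) \<longrightarrow>
        \<bar>fst (st p k1 k2 k3 k4)\<bar> \<le> E \<and> Inv (st p k1 k2 k3 k4))"
proof (induction n rule: less_induct)
  case (less n)
  show ?case
  proof (intro allI impI)
    fix i1 i2 i3 i4
    assume n: "i2 + i4 = n" and o1: "i1 \<le> i2" and o3: "i3 \<le> i4" and dE: "\<bar>fst (st p i1 i2 i3 i4)\<bar> \<le> E"
    have bot: "\<bar>fst (st p k1 k2 k3 k4)\<bar> \<le> E \<and> Inv (st p k1 k2 k3 k4)"
      if d1: "i1 = Lam p k1 + r1" "r1 < length (phi p (u p k1))"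
        and d2: "i2 = Lam p k2 + r2" "r2 < length (phi p (u p k2))"
        and d3: "i3 = Lam p k3 + r3" "r3 < length (phi p (u p k3))"
        and d4: "i4 = Lam p k4 + r4" "r4 < length (phi p (u p k4))"
        and pos: "i2 + i4 > 0"
      for k1 r1 k2 r2 k3 r3 k4 r4
    proof -
      have k12: "k1 \<le> k2" using decomp_mono[of p k1 r1 k2 r2] d1 d2 o1 by simp
      have k34: "k3 \<le> k4" using decomp_mono[of p k3 r3 k4 r4] d3 d4 o3 by simp
      have ki2: "k2 \<le> i2" using Lam_ge[where p=p and k=k2] d2 by simp
      have ki4: "k4 \<le> i4" using Lam_ge[where p=p and k=k4] d4 by simp
      have ki2': "k2 < i2 \<or> i2 = 0" using Lam_gt[OF p1, of k2] d2 ki2 by (cases "k2 = 0") auto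
      have ki4': "k4 < i4 \<or> i4 = 0" using Lam_gt[OF p1, of k4] d4 ki4 by (cases "k4 = 0") auto
      have meas: "k2 + k4 < n" using ki2 ki4 ki2' ki4' pos n by auto
      have TRt: "TR p (st p k1 k2 k3 k4) (st p i1 i2 i3 i4)"
        using trans_lemma[OF p1 d1 d2 d3 d4] .
      have r2: "r2 \<le> p" using d2(2) len_le[OF p1, of "u p k2"] by simp
      have r4: "r4 \<le> p" using d4(2) len_le[OF p1, of "u p k4"] by simp
      have topd: "fst (st p i1 i2 i3 i4) = (int (Lam p k2) - int (Lam p k1)) - (int (Lam p k4) - int (Lam p k3))
                 + int r2 - int r1 - int r4 + int r3"
        using d1 d2 d3 d4 by (simp add: st_def)
      have bd: "\<bar>fst (st p k1 k2 k3 k4)\<bar> \<le> E"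
      proof (rule ccontr)
        assume "\<not> \<bar>fst (st p k1 k2 k3 k4)\<bar> \<le> E"
        then consider "fst (st p k1 k2 k3 k4) > E" | "fst (st p k1 k2 k3 k4) < -E" by linarith
        then show False
        proof cases
          case 1
          define k2' where "k2' = k1 + (k4 - k3) + nat E"
          have fst1: "fst (st p k1 k2 k3 k4) = (int k2 - int k1) - (int k4 - int k3)" by (simp add: st_def)
          have k2'lt: "k2' < k2" using 1 fst1 E0 k34 unfolding k2'_def by linarith
          have k12': "k1 \<le> k2'" unfolding k2'_def by simp
          have fst2: "fst (st p k1 k2' k3 k4) = E" using k34 E0 unfolding k2'_def by (simp add: st_def)
          have "Inv (st p k1 k2' k3 k4)"
            using less.IH[of "k2' + k4"] meas k2'lt k12' k34 fst2 E0 by auto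
          moreover obtain s m where stq: "st p k1 k2' k3 k4 = (E, s, m, u p k1, u p k3)"
            using fst2 by (simp add: st_def)
          ultimately have B: "(int p + 1) * E - int p * s - m + 1 - (ell p (u p k1) - 1) - int p > E"
            using bnd_pos by simp
          have lf: "(int p + 1) * E - int p * s - m = (int (Lam p k2') - int (Lam p k1)) - (int (Lam p k4) - int (Lam p k3))"
            using st_lform[OF p1, of k1 k2' k3 k4] stq by simp
          have "Lam p k2 \<ge> Lam p (Suc k2')" using k2'lt by (intro Lam_mono) simp
          then have "int (Lam p k2) \<ge> int (Lam p k2') + 1" using len_ge1[of p "u p k2'"] by (simp add: Lam_Suc)
          moreover have "int r1 \<le> ell p (u p k1) - 1" using d1(2) by (simp add: ell_def)
          ultimately have "fst (st p i1 i2 i3 i4) > E" using topd B lf r4 by linarith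
          then show False using dE by simp
        next
          case 2
          define k4' where "k4' = k3 + (k2 - k1) + nat E"
          have fst1: "fst (st p k1 k2 k3 k4) = (int k2 - int k1) - (int k4 - int k3)" by (simp add: st_def)
          have k4'lt: "k4' < k4" using 2 fst1 E0 k12 unfolding k4'_def by linarith
          have k34': "k3 \<le> k4'" unfolding k4'_def by simp
          have fst2: "fst (st p k1 k2 k3 k4') = -E" using k12 E0 unfolding k4'_def by (simp add: st_def)
          have "Inv (st p k1 k2 k3 k4')"
            using less.IH[of "k2 + k4'"] meas k4'lt k12 k34' fst2 E0 by auto
          moreover obtain s m where stq: "st p k1 k2 k3 k4' = (-E, s, m, u p k1, u p k3)"
            using fst2 by (simp add: st_def)
          ultimately have B: "-(int p + 1) * E - int p * s - m - 1 + (ell p (u p k3) - 1) + int p < -E"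
            using bnd_neg by simp
          have lf: "(int p + 1) * (-E) - int p * s - m = (int (Lam p k2) - int (Lam p k1)) - (int (Lam p k4') - int (Lam p k3))"
            using st_lform[OF p1, of k1 k2 k3 k4'] stq by simp
          have "Lam p k4 \<ge> Lam p (Suc k4')" using k4'lt by (intro Lam_mono) simp
          then have "int (Lam p k4) \<ge> int (Lam p k4') + 1" using len_ge1[of p "u p k4'"] by (simp add: Lam_Suc)
          moreover have "int r3 \<le> ell p (u p k3) - 1" using d3(2) by (simp add: ell_def)
          moreover have "(int p + 1) * (-E) = -((int p + 1) * E)" by simp
          ultimately have "fst (st p i1 i2 i3 i4) < -E" using topd B lf r2 by linarith
          then show False using dE by simp
        qed
      qed
      have "Inv (st p k1 k2 k3 k4)"
        using less.IH[of "k2 + k4"] meas k12 k34 bd by auto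
      then show ?thesis using bd by simp
    qed
    show "Inv (st p i1 i2 i3 i4) \<and>
     (\<forall>k1 r1 k2 r2 k3 r3 k4 r4. i1 = Lam p k1 + r1 \<longrightarrow> r1 < length (phi p (u p k1)) \<longrightarrow>
        i2 = Lam p k2 + r2 \<longrightarrow> r2 < length (phi p (u p k2)) \<longrightarrow>
        i3 = Lam p k3 + r3 \<longrightarrow> r3 < length (phi p (u p k3)) \<longrightarrow>
        i4 = Lam p k4 + r4 \<longrightarrow> r4 < length (phi p (u p k4)) \<longrightarrow>
        \<bar>fst (st p k1 k2 k3 k4)\<bar> \<le> E \<and> Inv (st p k1 k2 k3 k4))"
    proof (cases "i2 + i4 = 0")
      case True
      then have "i1 = 0" "i2 = 0" "i3 = 0" "i4 = 0" using o1 o3 by auto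
      then have st0: "st p i1 i2 i3 i4 = (0, 0, 0, L, L)" using u_0[OF p1] by (simp add: st_def)
      have dec0: "k = 0" if "0 = Lam p k + r" for k r
        using Lam_ge[where p=p and k=k] that by simp
      show ?thesis
      proof (rule conjI)
        show "Inv (st p i1 i2 i3 i4)" using st0 base by simp
      next
        show "\<forall>k1 r1 k2 r2 k3 r3 k4 r4. i1 = Lam p k1 + r1 \<longrightarrow> r1 < length (phi p (u p k1)) \<longrightarrow>
        i2 = Lam p k2 + r2 \<longrightarrow> r2 < length (phi p (u p k2)) \<longrightarrow>
        i3 = Lam p k3 + r3 \<longrightarrow> r3 < length (phi p (u p k3)) \<longrightarrow>
        i4 = Lam p k4 + r4 \<longrightarrow> r4 < length (phi p (u p k4)) \<longrightarrow>
        \<bar>fst (st p k1 k2 k3 k4)\<bar> \<le> E \<and> Inv (st p k1 k2 k3 k4)"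
        proof (intro allI impI)
        fix k1 r1 k2 r2 k3 r3 k4 r4
        assume "i1 = Lam p k1 + r1" "r1 < length (phi p (u p k1))" "i2 = Lam p k2 + r2" "r2 < length (phi p (u p k2))"
          "i3 = Lam p k3 + r3" "r3 < length (phi p (u p k3))" "i4 = Lam p k4 + r4" "r4 < length (phi p (u p k4))"
        then have "k1 = 0" "k2 = 0" "k3 = 0" "k4 = 0" using dec0 \<open>i1 = 0\<close> \<open>i2 = 0\<close> \<open>i3 = 0\<close> \<open>i4 = 0\<close> by metis+
        then have "st p k1 k2 k3 k4 = (0, 0, 0, L, L)" using u_0[OF p1] by (simp add: st_def)
        then show "\<bar>fst (st p k1 k2 k3 k4)\<bar> \<le> E \<and> Inv (st p k1 k2 k3 k4)" using base E0 by simp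
        qed
      qed
    next
      case False
      obtain k1 r1 where d1: "i1 = Lam p k1 + r1" "r1 < length (phi p (u p k1))" using decomp by blast
      obtain k2 r2 where d2: "i2 = Lam p k2 + r2" "r2 < length (phi p (u p k2))" using decomp by blast
      obtain k3 r3 where d3: "i3 = Lam p k3 + r3" "r3 < length (phi p (u p k3))" using decomp by blast
      obtain k4 r4 where d4: "i4 = Lam p k4 + r4" "r4 < length (phi p (u p k4))" using decomp by blast
      have B: "\<bar>fst (st p k1 k2 k3 k4)\<bar> \<le> E \<and> Inv (st p k1 k2 k3 k4)"
        using bot[OF d1 d2 d3 d4] False by simp
      have "Inv (st p i1 i2 i3 i4)"
        using closure[of "st p k1 k2 k3 k4" "st p i1 i2 i3 i4"] B trans_lemma[OF p1 d1 d2 d3 d4] dE by simp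
      moreover have "\<forall>k1 r1 k2 r2 k3 r3 k4 r4. i1 = Lam p k1 + r1 \<longrightarrow> r1 < length (phi p (u p k1)) \<longrightarrow>
        i2 = Lam p k2 + r2 \<longrightarrow> r2 < length (phi p (u p k2)) \<longrightarrow>
        i3 = Lam p k3 + r3 \<longrightarrow> r3 < length (phi p (u p k3)) \<longrightarrow>
        i4 = Lam p k4 + r4 \<longrightarrow> r4 < length (phi p (u p k4)) \<longrightarrow>
        \<bar>fst (st p k1 k2 k3 k4)\<bar> \<le> E \<and> Inv (st p k1 k2 k3 k4)"
      proof (intro allI impI)
        fix k1 r1 k2 r2 k3 r3 k4 r4
        assume H: "i1 = Lam p k1 + r1" "r1 < length (phi p (u p k1))" "i2 = Lam p k2 + r2" "r2 < length (phi p (u p k2))"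
          "i3 = Lam p k3 + r3" "r3 < length (phi p (u p k3))" "i4 = Lam p k4 + r4" "r4 < length (phi p (u p k4))"
        show "\<bar>fst (st p k1 k2 k3 k4)\<bar> \<le> E \<and> Inv (st p k1 k2 k3 k4)"
          using bot[OF H] False by simp
      qed
      ultimately show ?thesis by (rule conjI)
    qed
  qed
qed

end


lemma count_letters: "count_list xs L + count_list xs S + count_list xs M = length xs"
proof (induction xs)
  case Nil then show ?case by simp
next
  case (Cons a xs) then show ?case by (cases a) auto
qed

locale inv_sys_fin = inv_sys +
  assumes final: "\<And>t1 d0 s0 m0 a1 a3. Inv t1 \<Longrightarrow> TR p t1 (d0, s0, m0, a1, a3) \<Longrightarrow> Inv (d0, s0, m0, a1, a3)
     \<Longrightarrow> d0 = 0 \<Longrightarrow> \<bar>fst t1\<bar> \<le> E \<Longrightarrow> \<bar>s0\<bar> \<le> 3 \<and> \<bar>m0\<bar> \<le> 3 \<and> \<bar>s0 + m0\<bar> \<le> 3"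
begin

lemma main:
  assumes "i1 \<le> i2" "i3 \<le> i4" "\<bar>fst (st p i1 i2 i3 i4)\<bar> \<le> E"
  shows "Inv (st p i1 i2 i3 i4)"
  using main_aux[of "i2 + i4"] assms by blast

lemma main_bot:
  assumes "i1 \<le> i2" "i3 \<le> i4" "\<bar>fst (st p i1 i2 i3 i4)\<bar> \<le> E"
    and "i1 = Lam p k1 + r1" "r1 < length (phi p (u p k1))"
        "i2 = Lam p k2 + r2" "r2 < length (phi p (u p k2))"
        "i3 = Lam p k3 + r3" "r3 < length (phi p (u p k3))"
        "i4 = Lam p k4 + r4" "r4 < length (phi p (u p k4))"
  shows "\<bar>fst (st p k1 k2 k3 k4)\<bar> \<le> E \<and> Inv (st p k1 k2 k3 k4)"
  using main_aux[of "i2 + i4"] assms by blast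

lemma window_bounds:
  "\<bar>(cS p (i+n) - cS p i) - (cS p (j+n) - cS p j)\<bar> \<le> 3 \<and>
   \<bar>(cM p (i+n) - cM p i) - (cM p (j+n) - cM p j)\<bar> \<le> 3 \<and>
   \<bar>((cS p (i+n) - cS p i) - (cS p (j+n) - cS p j)) + ((cM p (i+n) - cM p i) - (cM p (j+n) - cM p j))\<bar> \<le> 3"
proof -
  let ?t0 = "st p i (i+n) j (j+n)"
  have f0: "fst ?t0 = 0" by (simp add: st_def)
  have I0: "Inv ?t0" using main[of i "i+n" j "j+n"] f0 E0 by simp
  obtain k1 r1 where d1: "i = Lam p k1 + r1" "r1 < length (phi p (u p k1))" using decomp by blast
  obtain k2 r2 where d2: "i + n = Lam p k2 + r2" "r2 < length (phi p (u p k2))" using decomp by blast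
  obtain k3 r3 where d3: "j = Lam p k3 + r3" "r3 < length (phi p (u p k3))" using decomp by blast
  obtain k4 r4 where d4: "j + n = Lam p k4 + r4" "r4 < length (phi p (u p k4))" using decomp by blast
  have B: "\<bar>fst (st p k1 k2 k3 k4)\<bar> \<le> E \<and> Inv (st p k1 k2 k3 k4)"
    using main_bot[OF _ _ _ d1 d2 d3 d4] f0 E0 by simp
  have T: "TR p (st p k1 k2 k3 k4) ?t0" using trans_lemma[OF p1 d1 d2 d3 d4] .
  have "?t0 = (0, (cS p (i+n) - cS p i) - (cS p (j+n) - cS p j), (cM p (i+n) - cM p i) - (cM p (j+n) - cM p j), u p i, u p j)"
    by (simp add: st_def)
  then show ?thesis using final[of "st p k1 k2 k3 k4"] B T I0 by simp
qed

lemma balanced3: "balanced 3 (u p)"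
  unfolding balanced_def
proof (intro allI impI)
  fix a v x assume H: "v \<in> factors (u p) \<and> x \<in> factors (u p) \<and> length v = length x"
  then obtain i n j m where v: "v = map (u p) [i..<i+n]" and x: "x = map (u p) [j..<j+m]"
    by (auto simp: factors_def)
  then have nm: "m = n" using H by simp
  have cv: "int (count_list v b) = int (cnt p b (i+n)) - int (cnt p b i)" for b
    using count_window[of i "i+n" p b] cnt_mono[of i "i+n" p b] v by simp
  have cx: "int (count_list x b) = int (cnt p b (j+n)) - int (cnt p b j)" for b
    using count_window[of j "j+n" p b] cnt_mono[of j "j+n" p b] x nm by simp
  have lv: "length v = n" "length x = n" using v x nm by auto
  have WB: "\<bar>(cS p (i+n) - cS p i) - (cS p (j+n) - cS p j)\<bar> \<le> 3 \<and>
   \<bar>(cM p (i+n) - cM p i) - (cM p (j+n) - cM p j)\<bar> \<le> 3 \<and>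
   \<bar>((cS p (i+n) - cS p i) - (cS p (j+n) - cS p j)) + ((cM p (i+n) - cM p i) - (cM p (j+n) - cM p j))\<bar> \<le> 3"
    by (rule window_bounds)
  have Lv: "int (count_list v L) = int n - int (count_list v S) - int (count_list v M)"
    using count_letters[of v] lv by simp
  have Lx: "int (count_list x L) = int n - int (count_list x S) - int (count_list x M)"
    using count_letters[of x] lv by simp
  show "\<bar>int (count_list v a) - int (count_list x a)\<bar> \<le> int 3"
  proof (cases a)
    case L then show ?thesis using WB Lv Lx cv[of S] cv[of M] cx[of S] cx[of M] by (simp add: cS_def cM_def) linarith
  next
    case S then show ?thesis using WB cv[of S] cx[of S] by (simp add: cS_def cM_def)
  next
    case M then show ?thesis using WB cv[of M] cx[of M] by (simp add: cS_def cM_def)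
  qed
qed
end


fun lenc :: "nat \<Rightarrow> letter \<Rightarrow> int" where
  "lenc p L = int p + 1" | "lenc p S = 1" | "lenc p M = int p"

lemma lenc_eq: "p \<ge> 1 \<Longrightarrow> int (length (phi p c)) = lenc p c"
  by (cases c) auto

definition tabInv :: "(letter \<Rightarrow> letter \<Rightarrow> int \<Rightarrow> int \<Rightarrow> int \<times> int) \<Rightarrow> state \<Rightarrow> bool" where
  "tabInv tb t = (case t of (d, s, m, c1, c3) \<Rightarrow>
     -6 \<le> s \<and> s \<le> 6 \<and> -6 \<le> m \<and> m \<le> 6 \<and> fst (tb c1 c3 s m) \<le> d \<and> d \<le> snd (tb c1 c3 s m))"

definition cases_of :: "nat \<Rightarrow> letter \<Rightarrow> (int \<times> int \<times> letter) list" where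
  "cases_of p c = (if lenc p c \<ge> 2 then [(0, lenc p c - 2, L), (lenc p c - 1, lenc p c - 1, bl c)]
                   else [(lenc p c - 1, lenc p c - 1, bl c)])"

definition step_ok :: "nat \<Rightarrow> int \<Rightarrow> (letter \<Rightarrow> letter \<Rightarrow> int \<Rightarrow> int \<Rightarrow> int \<times> int) \<Rightarrow> int \<Rightarrow> int \<Rightarrow> int
     \<Rightarrow> int \<times> int \<times> letter \<Rightarrow> int \<times> int \<times> letter \<Rightarrow> bool" where
  "step_ok p E tb d s m x1 x3 = (case x1 of (a1lo, a1hi, a1) \<Rightarrow> case x3 of (a3lo, a3hi, a3) \<Rightarrow>
    (let base = (int p + 1) * d - int p * s - m;
         clo = max (base - int p - a1hi + a3lo) (- E);
         chi = min (base + int p - a1lo + a3hi) E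
     in clo \<le> chi \<longrightarrow> (-6 \<le> d - s \<and> d - s \<le> 6 \<and> fst (tb a1 a3 (d - s) s) \<le> clo \<and> chi \<le> snd (tb a1 a3 (d - s) s))))"

definition chk :: "nat \<Rightarrow> int \<Rightarrow> (letter \<Rightarrow> letter \<Rightarrow> int \<Rightarrow> int \<Rightarrow> int \<times> int) \<Rightarrow> bool" where
  "chk p E tb = list_all (\<lambda>c1. list_all (\<lambda>c3. list_all (\<lambda>s. list_all (\<lambda>m.
     list_all (\<lambda>d. list_all (\<lambda>x1. list_all (\<lambda>x3. step_ok p E tb d s m x1 x3) (cases_of p c3)) (cases_of p c1))
        [fst (tb c1 c3 s m)..snd (tb c1 c3 s m)]) [-6..6]) [-6..6]) [L,S,M]) [L,S,M]"

definition bchk :: "nat \<Rightarrow> int \<Rightarrow> (letter \<Rightarrow> letter \<Rightarrow> int \<Rightarrow> int \<Rightarrow> int \<times> int) \<Rightarrow> bool" where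
  "bchk p E tb = list_all (\<lambda>c1. list_all (\<lambda>c3. list_all (\<lambda>s. list_all (\<lambda>m.
     (fst (tb c1 c3 s m) \<le> E \<and> E \<le> snd (tb c1 c3 s m) \<longrightarrow>
        (int p + 1) * E - int p * s - m + 1 - (lenc p c1 - 1) - int p > E) \<and>
     (fst (tb c1 c3 s m) \<le> -E \<and> -E \<le> snd (tb c1 c3 s m) \<longrightarrow>
        -(int p + 1) * E - int p * s - m - 1 + (lenc p c3 - 1) + int p < -E) \<and>
     (fst (tb c1 c3 s m) \<le> 0 \<and> 0 \<le> snd (tb c1 c3 s m) \<longrightarrow>
        \<bar>s\<bar> \<le> 3 \<and> \<bar>m\<bar> \<le> 3 \<and> \<bar>s + m\<bar> \<le> 3)) [-6..6]) [-6..6]) [L,S,M]) [L,S,M]"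

definition allchk :: "nat \<Rightarrow> int \<Rightarrow> (letter \<Rightarrow> letter \<Rightarrow> int \<Rightarrow> int \<Rightarrow> int \<times> int) \<Rightarrow> bool" where
  "allchk p E tb = (E \<ge> 0 \<and> fst (tb L L 0 0) \<le> 0 \<and> 0 \<le> snd (tb L L 0 0) \<and> bchk p E tb \<and> chk p E tb)"

lemma letter_in: "c \<in> set [L, S, M]" by (cases c) auto

lemma tab_props:
  assumes "bchk p E tb" "-6 \<le> s" "s \<le> 6" "-6 \<le> m" "m \<le> 6"
  shows "(fst (tb c1 c3 s m) \<le> E \<and> E \<le> snd (tb c1 c3 s m) \<longrightarrow>
        (int p + 1) * E - int p * s - m + 1 - (lenc p c1 - 1) - int p > E) \<and>
     (fst (tb c1 c3 s m) \<le> -E \<and> -E \<le> snd (tb c1 c3 s m) \<longrightarrow>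
        -(int p + 1) * E - int p * s - m - 1 + (lenc p c3 - 1) + int p < -E) \<and>
     (fst (tb c1 c3 s m) \<le> 0 \<and> 0 \<le> snd (tb c1 c3 s m) \<longrightarrow>
        \<bar>s\<bar> \<le> 3 \<and> \<bar>m\<bar> \<le> 3 \<and> \<bar>s + m\<bar> \<le> 3)"
proof -
  have "s \<in> set [-6..6]" "m \<in> set [-6..6]" using assms by auto
  then show ?thesis using assms(1) letter_in[of c1] letter_in[of c3] unfolding bchk_def list_all_iff
    by blast
qed

lemma chk_step:
  assumes "chk p E tb" "-6 \<le> s" "s \<le> 6" "-6 \<le> m" "m \<le> 6" "fst (tb c1 c3 s m) \<le> d" "d \<le> snd (tb c1 c3 s m)"
    "x1 \<in> set (cases_of p c1)" "x3 \<in> set (cases_of p c3)"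
  shows "step_ok p E tb d s m x1 x3"
proof -
  have "s \<in> set [-6..6]" "m \<in> set [-6..6]" "d \<in> set [fst (tb c1 c3 s m)..snd (tb c1 c3 s m)]" using assms by auto
  then show ?thesis using assms(1,8,9) letter_in[of c1] letter_in[of c3] unfolding chk_def list_all_iff
    by blast
qed

lemma case_pick:
  assumes p1: "p \<ge> 1" and r: "r < length (phi p c)"
  shows "\<exists>lo hi. (lo, hi, lt p r c) \<in> set (cases_of p c) \<and> lo \<le> int r \<and> int r \<le> hi"
proof -
  have le: "int (length (phi p c)) = lenc p c" by (rule lenc_eq[OF p1])
  show ?thesis
  proof (cases "r < length (phi p c) - 1")
    case True
    then have "lenc p c \<ge> 2" using le r by linarith
    then show ?thesis using True le unfolding cases_of_def lt_def
      by (intro exI[of _ 0] exI[of _ "lenc p c - 2"]) auto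
  next
    case False
    then have rr: "int r = lenc p c - 1" using le r by linarith
    show ?thesis using False rr unfolding cases_of_def lt_def
      by (intro exI[of _ "lenc p c - 1"] exI[of _ "lenc p c - 1"]) auto
  qed
qed

lemma tab_sound:
  assumes p1: "p \<ge> 1" and A: "allchk p E tb"
  shows "inv_sys_fin p E (tabInv tb)"
proof -
  have E0: "E \<ge> 0" and C: "chk p E tb" and B: "bchk p E tb" and base: "fst (tb L L 0 0) \<le> 0" "0 \<le> snd (tb L L 0 0)"
    using A by (auto simp: allchk_def)
  show ?thesis
  proof (unfold_locales)
    show "1 \<le> p" using p1 by simp
    show "0 \<le> E" using E0 .
  next
    fix t' t assume I: "tabInv tb t'" and T: "TR p t' t" and dE: "\<bar>fst t\<bar> \<le> E" and "\<bar>fst t'\<bar> \<le> E"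
    obtain d' s' m' c1 c3 where t': "t' = (d', s', m', c1, c3)" by (cases t') auto
    obtain d s m a1 a3 where t: "t = (d, s, m, a1, a3)" by (cases t) auto
    from T obtain r1 r2 r3 r4 where R: "r1 < length (phi p c1)" "r3 < length (phi p c3)" "r2 \<le> p" "r4 \<le> p"
      "d = (int p + 1) * d' - int p * s' - m' + int r2 - int r1 - int r4 + int r3"
      "s = d' - s'" "m = s'" "a1 = lt p r1 c1" "a3 = lt p r3 c3"
      unfolding t t' by auto
    obtain lo1 hi1 where x1: "(lo1, hi1, a1) \<in> set (cases_of p c1)" "lo1 \<le> int r1" "int r1 \<le> hi1"
      using case_pick[OF p1 R(1)] R(8) by blast
    obtain lo3 hi3 where x3: "(lo3, hi3, a3) \<in> set (cases_of p c3)" "lo3 \<le> int r3" "int r3 \<le> hi3"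
      using case_pick[OF p1 R(2)] R(9) by blast
    have Ii: "-6 \<le> s'" "s' \<le> 6" "-6 \<le> m'" "m' \<le> 6" "fst (tb c1 c3 s' m') \<le> d'" "d' \<le> snd (tb c1 c3 s' m')"
      using I unfolding t' tabInv_def by auto
    have so: "step_ok p E tb d' s' m' (lo1, hi1, a1) (lo3, hi3, a3)"
      using chk_step[OF C Ii x1(1) x3(1)] .
    define base where "base = (int p + 1) * d' - int p * s' - m'"
    have dlo: "max (base - int p - hi1 + lo3) (- E) \<le> d"
      using R(3-5) x1 x3 dE unfolding t base_def by simp
    have dhi: "d \<le> min (base + int p - lo1 + hi3) E"
      using R(3-5) x1 x3 dE unfolding t base_def by simp
    from so dlo dhi have "-6 \<le> d' - s' \<and> d' - s' \<le> 6 \<and> fst (tb a1 a3 (d' - s') s') \<le> d \<and> d \<le> snd (tb a1 a3 (d' - s') s')"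
      unfolding step_ok_def Let_def base_def by auto
    then show "tabInv tb t" unfolding t tabInv_def using R(6,7) Ii by auto
  next
    fix s m c1 c3 assume "tabInv tb (E, s, m, c1, c3)"
    then show "(int p + 1) * E - int p * s - m + 1 - (ell p c1 - 1) - int p > E"
      using tab_props[OF B, of s m c1 c3] lenc_eq[OF p1, of c1] by (auto simp: tabInv_def ell_def)
  next
    fix s m c1 c3 assume "tabInv tb (-E, s, m, c1, c3)"
    then show "-(int p + 1) * E - int p * s - m - 1 + (ell p c3 - 1) + int p < -E"
      using tab_props[OF B, of s m c1 c3] lenc_eq[OF p1, of c3] by (auto simp: tabInv_def ell_def)
  next
    show "tabInv tb (0, 0, 0, L, L)" using base by (simp add: tabInv_def)
  next
    fix t1 d0 s0 m0 a1 a3 assume "tabInv tb (d0, s0, m0, a1, a3)" "d0 = 0"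
    then show "\<bar>s0\<bar> \<le> 3 \<and> \<bar>m0\<bar> \<le> 3 \<and> \<bar>s0 + m0\<bar> \<le> 3"
      using tab_props[OF B, of s0 m0 a1 a3] by (auto simp: tabInv_def)
  qed
qed


definition tab2_LL_m4 :: "int \<Rightarrow> int \<times> int" where "tab2_LL_m4 m = (if m = (-2) then ((-7),(-7)) else (if m = (-1) then ((-7),(-6)) else (if m = (0) then ((-7),(-6)) else (if m = (1) then ((-7),(-5)) else (if m = (2) then ((-7),(-5)) else (1,0))))))"
definition tab2_LL_m3 :: "int \<Rightarrow> int \<times> int" where "tab2_LL_m3 m = (if m = (-3) then ((-7),(-7)) else (if m = (-2) then ((-7),(-5)) else (if m = (-1) then ((-7),(-4)) else (if m = (0) then ((-7),(-3)) else (if m = (1) then ((-7),(-2)) else (if m = (2) then ((-7),(-2)) else (1,0)))))))"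
definition tab2_LL_m2 :: "int \<Rightarrow> int \<times> int" where "tab2_LL_m2 m = (if m = (-4) then ((-7),(-6)) else (if m = (-3) then ((-7),(-4)) else (if m = (-2) then ((-7),(-2)) else (if m = (-1) then ((-7),(-1)) else (if m = (0) then ((-7),(0)) else (if m = (1) then ((-7),(1)) else (if m = (2) then ((-7),(1)) else (1,0))))))))"
definition tab2_LL_m1 :: "int \<Rightarrow> int \<times> int" where "tab2_LL_m1 m = (if m = (-4) then ((-7),(-5)) else (if m = (-3) then ((-7),(-2)) else (if m = (-2) then ((-7),(0)) else (if m = (-1) then ((-7),(2)) else (if m = (0) then ((-7),(3)) else (if m = (1) then ((-7),(4)) else (if m = (2) then ((-5),(4)) else (if m = (3) then ((-2),(5)) else (1,0)))))))))"
definition tab2_LL_p0 :: "int \<Rightarrow> int \<times> int" where "tab2_LL_p0 m = (if m = (-3) then ((-7),(0)) else (if m = (-2) then ((-7),(3)) else (if m = (-1) then ((-7),(4)) else (if m = (0) then ((-6),(6)) else (if m = (1) then ((-4),(7)) else (if m = (2) then ((-3),(7)) else (if m = (3) then ((0),(7)) else (1,0))))))))"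
definition tab2_LL_p1 :: "int \<Rightarrow> int \<times> int" where "tab2_LL_p1 m = (if m = (-3) then ((-5),(2)) else (if m = (-2) then ((-4),(5)) else (if m = (-1) then ((-4),(7)) else (if m = (0) then ((-3),(7)) else (if m = (1) then ((-2),(7)) else (if m = (2) then ((0),(7)) else (if m = (3) then ((2),(7)) else (if m = (4) then ((5),(7)) else (1,0)))))))))"
definition tab2_LL_p2 :: "int \<Rightarrow> int \<times> int" where "tab2_LL_p2 m = (if m = (-2) then ((-1),(7)) else (if m = (-1) then ((-1),(7)) else (if m = (0) then ((0),(7)) else (if m = (1) then ((1),(7)) else (if m = (2) then ((2),(7)) else (if m = (3) then ((4),(7)) else (if m = (4) then ((6),(7)) else (1,0))))))))"
definition tab2_LL_p3 :: "int \<Rightarrow> int \<times> int" where "tab2_LL_p3 m = (if m = (-2) then ((2),(7)) else (if m = (-1) then ((2),(7)) else (if m = (0) then ((3),(7)) else (if m = (1) then ((4),(7)) else (if m = (2) then ((5),(7)) else (if m = (3) then ((7),(7)) else (1,0)))))))"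
definition tab2_LL_p4 :: "int \<Rightarrow> int \<times> int" where "tab2_LL_p4 m = (if m = (-2) then ((5),(7)) else (if m = (-1) then ((5),(7)) else (if m = (0) then ((6),(7)) else (if m = (1) then ((6),(7)) else (if m = (2) then ((7),(7)) else (1,0))))))"
definition tab2_LL :: "int \<Rightarrow> int \<Rightarrow> int \<times> int" where "tab2_LL s m = (if s = (-4) then tab2_LL_m4 m else (if s = (-3) then tab2_LL_m3 m else (if s = (-2) then tab2_LL_m2 m else (if s = (-1) then tab2_LL_m1 m else (if s = (0) then tab2_LL_p0 m else (if s = (1) then tab2_LL_p1 m else (if s = (2) then tab2_LL_p2 m else (if s = (3) then tab2_LL_p3 m else (if s = (4) then tab2_LL_p4 m else (1,0))))))))))"
definition tab2_LS_m5 :: "int \<Rightarrow> int \<times> int" where "tab2_LS_m5 m = (if m = (1) then ((-7),(-7)) else (1,0))"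
definition tab2_LS_m4 :: "int \<Rightarrow> int \<times> int" where "tab2_LS_m4 m = (if m = (-2) then ((-7),(-6)) else (if m = (-1) then ((-7),(-5)) else (if m = (0) then ((-7),(-5)) else (if m = (1) then ((-7),(-4)) else (if m = (2) then ((-7),(-4)) else (1,0))))))"
definition tab2_LS_m3 :: "int \<Rightarrow> int \<times> int" where "tab2_LS_m3 m = (if m = (-4) then ((-7),(-7)) else (if m = (-3) then ((-7),(-6)) else (if m = (-2) then ((-7),(-4)) else (if m = (-1) then ((-7),(-3)) else (if m = (0) then ((-7),(-2)) else (if m = (1) then ((-7),(-1)) else (if m = (2) then ((-7),(-1)) else (1,0))))))))"
definition tab2_LS_m2 :: "int \<Rightarrow> int \<times> int" where "tab2_LS_m2 m = (if m = (-4) then ((-7),(-5)) else (if m = (-3) then ((-7),(-3)) else (if m = (-2) then ((-7),(-1)) else (if m = (-1) then ((-7),(0)) else (if m = (0) then ((-7),(1)) else (if m = (1) then ((-7),(2)) else (if m = (2) then ((-6),(2)) else (1,0))))))))"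
definition tab2_LS_m1 :: "int \<Rightarrow> int \<times> int" where "tab2_LS_m1 m = (if m = (-4) then ((-7),(-4)) else (if m = (-3) then ((-7),(-1)) else (if m = (-2) then ((-7),(1)) else (if m = (-1) then ((-7),(3)) else (if m = (0) then ((-7),(4)) else (if m = (1) then ((-5),(5)) else (if m = (2) then ((-4),(5)) else (if m = (3) then ((-1),(6)) else (1,0)))))))))"
definition tab2_LS_p0 :: "int \<Rightarrow> int \<times> int" where "tab2_LS_p0 m = (if m = (-3) then ((-6),(1)) else (if m = (-2) then ((-5),(4)) else (if m = (-1) then ((-5),(5)) else (if m = (0) then ((-4),(7)) else (if m = (1) then ((-3),(7)) else (if m = (2) then ((-1),(7)) else (if m = (3) then ((1),(7)) else (1,0))))))))"
definition tab2_LS_p1 :: "int \<Rightarrow> int \<times> int" where "tab2_LS_p1 m = (if m = (-3) then ((-3),(3)) else (if m = (-2) then ((-2),(6)) else (if m = (-1) then ((-2),(7)) else (if m = (0) then ((-1),(7)) else (if m = (1) then ((0),(7)) else (if m = (2) then ((1),(7)) else (if m = (3) then ((3),(7)) else (if m = (4) then ((6),(7)) else (1,0)))))))))"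
definition tab2_LS_p2 :: "int \<Rightarrow> int \<times> int" where "tab2_LS_p2 m = (if m = (-2) then ((1),(7)) else (if m = (-1) then ((1),(7)) else (if m = (0) then ((2),(7)) else (if m = (1) then ((3),(7)) else (if m = (2) then ((4),(7)) else (if m = (3) then ((6),(7)) else (1,0)))))))"
definition tab2_LS_p3 :: "int \<Rightarrow> int \<times> int" where "tab2_LS_p3 m = (if m = (-2) then ((4),(7)) else (if m = (-1) then ((4),(7)) else (if m = (0) then ((5),(7)) else (if m = (1) then ((5),(7)) else (if m = (2) then ((6),(7)) else (1,0))))))"
definition tab2_LS_p4 :: "int \<Rightarrow> int \<times> int" where "tab2_LS_p4 m = (if m = (-2) then ((7),(7)) else (if m = (-1) then ((7),(7)) else (1,0)))"
definition tab2_LS :: "int \<Rightarrow> int \<Rightarrow> int \<times> int" where "tab2_LS s m = (if s = (-5) then tab2_LS_m5 m else (if s = (-4) then tab2_LS_m4 m else (if s = (-3) then tab2_LS_m3 m else (if s = (-2) then tab2_LS_m2 m else (if s = (-1) then tab2_LS_m1 m else (if s = (0) then tab2_LS_p0 m else (if s = (1) then tab2_LS_p1 m else (if s = (2) then tab2_LS_p2 m else (if s = (3) then tab2_LS_p3 m else (if s = (4) then tab2_LS_p4 m else (1,0)))))))))))"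
definition tab2_LM_m4 :: "int \<Rightarrow> int \<times> int" where "tab2_LM_m4 m = (if m = (-1) then ((-7),(-7)) else (if m = (0) then ((-7),(-7)) else (if m = (1) then ((-7),(-6)) else (1,0))))"
definition tab2_LM_m3 :: "int \<Rightarrow> int \<times> int" where "tab2_LM_m3 m = (if m = (-3) then ((-7),(-7)) else (if m = (-2) then ((-7),(-5)) else (if m = (-1) then ((-7),(-4)) else (if m = (0) then ((-7),(-4)) else (if m = (1) then ((-7),(-3)) else (1,0))))))"
definition tab2_LM_m2 :: "int \<Rightarrow> int \<times> int" where "tab2_LM_m2 m = (if m = (-4) then ((-7),(-6)) else (if m = (-3) then ((-7),(-5)) else (if m = (-2) then ((-7),(-3)) else (if m = (-1) then ((-7),(-2)) else (if m = (0) then ((-7),(-1)) else (if m = (1) then ((-7),(0)) else (1,0)))))))"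
definition tab2_LM_m1 :: "int \<Rightarrow> int \<times> int" where "tab2_LM_m1 m = (if m = (-4) then ((-7),(-4)) else (if m = (-3) then ((-7),(-2)) else (if m = (-2) then ((-7),(0)) else (if m = (-1) then ((-7),(1)) else (if m = (0) then ((-7),(2)) else (if m = (1) then ((-6),(3)) else (if m = (2) then ((-3),(3)) else (1,0))))))))"
definition tab2_LM_p0 :: "int \<Rightarrow> int \<times> int" where "tab2_LM_p0 m = (if m = (-4) then ((-7),(-3)) else (if m = (-3) then ((-7),(0)) else (if m = (-2) then ((-7),(2)) else (if m = (-1) then ((-7),(4)) else (if m = (0) then ((-5),(5)) else (if m = (1) then ((-4),(6)) else (if m = (2) then ((-1),(6)) else (1,0))))))))"
definition tab2_LM_p1 :: "int \<Rightarrow> int \<times> int" where "tab2_LM_p1 m = (if m = (-3) then ((-5),(2)) else (if m = (-2) then ((-4),(5)) else (if m = (-1) then ((-4),(6)) else (if m = (0) then ((-3),(7)) else (if m = (1) then ((-1),(7)) else (if m = (2) then ((1),(7)) else (if m = (3) then ((4),(7)) else (1,0))))))))"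
definition tab2_LM_p2 :: "int \<Rightarrow> int \<times> int" where "tab2_LM_p2 m = (if m = (-3) then ((-2),(4)) else (if m = (-2) then ((-1),(7)) else (if m = (-1) then ((-1),(7)) else (if m = (0) then ((0),(7)) else (if m = (1) then ((1),(7)) else (if m = (2) then ((3),(7)) else (if m = (3) then ((5),(7)) else (1,0))))))))"
definition tab2_LM_p3 :: "int \<Rightarrow> int \<times> int" where "tab2_LM_p3 m = (if m = (-2) then ((2),(7)) else (if m = (-1) then ((2),(7)) else (if m = (0) then ((3),(7)) else (if m = (1) then ((4),(7)) else (if m = (2) then ((6),(7)) else (if m = (3) then ((7),(7)) else (1,0)))))))"
definition tab2_LM_p4 :: "int \<Rightarrow> int \<times> int" where "tab2_LM_p4 m = (if m = (-2) then ((5),(7)) else (if m = (-1) then ((5),(7)) else (if m = (0) then ((6),(7)) else (if m = (1) then ((7),(7)) else (1,0)))))"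
definition tab2_LM :: "int \<Rightarrow> int \<Rightarrow> int \<times> int" where "tab2_LM s m = (if s = (-4) then tab2_LM_m4 m else (if s = (-3) then tab2_LM_m3 m else (if s = (-2) then tab2_LM_m2 m else (if s = (-1) then tab2_LM_m1 m else (if s = (0) then tab2_LM_p0 m else (if s = (1) then tab2_LM_p1 m else (if s = (2) then tab2_LM_p2 m else (if s = (3) then tab2_LM_p3 m else (if s = (4) then tab2_LM_p4 m else (1,0))))))))))"
definition tab2_SL_m4 :: "int \<Rightarrow> int \<times> int" where "tab2_SL_m4 m = (if m = (1) then ((-7),(-7)) else (if m = (2) then ((-7),(-7)) else (1,0)))"
definition tab2_SL_m3 :: "int \<Rightarrow> int \<times> int" where "tab2_SL_m3 m = (if m = (-2) then ((-7),(-6)) else (if m = (-1) then ((-7),(-5)) else (if m = (0) then ((-7),(-5)) else (if m = (1) then ((-7),(-4)) else (if m = (2) then ((-7),(-4)) else (1,0))))))"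
definition tab2_SL_m2 :: "int \<Rightarrow> int \<times> int" where "tab2_SL_m2 m = (if m = (-3) then ((-7),(-6)) else (if m = (-2) then ((-7),(-4)) else (if m = (-1) then ((-7),(-3)) else (if m = (0) then ((-7),(-2)) else (if m = (1) then ((-7),(-1)) else (if m = (2) then ((-7),(-1)) else (1,0)))))))"
definition tab2_SL_m1 :: "int \<Rightarrow> int \<times> int" where "tab2_SL_m1 m = (if m = (-4) then ((-7),(-6)) else (if m = (-3) then ((-7),(-3)) else (if m = (-2) then ((-7),(-1)) else (if m = (-1) then ((-7),(0)) else (if m = (0) then ((-7),(1)) else (if m = (1) then ((-7),(2)) else (if m = (2) then ((-6),(2)) else (if m = (3) then ((-3),(3)) else (1,0)))))))))"
definition tab2_SL_p0 :: "int \<Rightarrow> int \<times> int" where "tab2_SL_p0 m = (if m = (-3) then ((-7),(-1)) else (if m = (-2) then ((-7),(1)) else (if m = (-1) then ((-7),(3)) else (if m = (0) then ((-7),(4)) else (if m = (1) then ((-5),(5)) else (if m = (2) then ((-4),(5)) else (if m = (3) then ((-1),(6)) else (1,0))))))))"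
definition tab2_SL_p1 :: "int \<Rightarrow> int \<times> int" where "tab2_SL_p1 m = (if m = (-3) then ((-6),(1)) else (if m = (-2) then ((-5),(4)) else (if m = (-1) then ((-5),(5)) else (if m = (0) then ((-4),(7)) else (if m = (1) then ((-3),(7)) else (if m = (2) then ((-1),(7)) else (if m = (3) then ((1),(7)) else (if m = (4) then ((4),(7)) else (1,0)))))))))"
definition tab2_SL_p2 :: "int \<Rightarrow> int \<times> int" where "tab2_SL_p2 m = (if m = (-2) then ((-2),(6)) else (if m = (-1) then ((-2),(7)) else (if m = (0) then ((-1),(7)) else (if m = (1) then ((0),(7)) else (if m = (2) then ((1),(7)) else (if m = (3) then ((3),(7)) else (if m = (4) then ((5),(7)) else (1,0))))))))"
definition tab2_SL_p3 :: "int \<Rightarrow> int \<times> int" where "tab2_SL_p3 m = (if m = (-2) then ((1),(7)) else (if m = (-1) then ((1),(7)) else (if m = (0) then ((2),(7)) else (if m = (1) then ((3),(7)) else (if m = (2) then ((4),(7)) else (if m = (3) then ((6),(7)) else (if m = (4) then ((7),(7)) else (1,0))))))))"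
definition tab2_SL_p4 :: "int \<Rightarrow> int \<times> int" where "tab2_SL_p4 m = (if m = (-2) then ((4),(7)) else (if m = (-1) then ((4),(7)) else (if m = (0) then ((5),(7)) else (if m = (1) then ((5),(7)) else (if m = (2) then ((6),(7)) else (1,0))))))"
definition tab2_SL_p5 :: "int \<Rightarrow> int \<times> int" where "tab2_SL_p5 m = (if m = (-1) then ((7),(7)) else (1,0))"
definition tab2_SL :: "int \<Rightarrow> int \<Rightarrow> int \<times> int" where "tab2_SL s m = (if s = (-4) then tab2_SL_m4 m else (if s = (-3) then tab2_SL_m3 m else (if s = (-2) then tab2_SL_m2 m else (if s = (-1) then tab2_SL_m1 m else (if s = (0) then tab2_SL_p0 m else (if s = (1) then tab2_SL_p1 m else (if s = (2) then tab2_SL_p2 m else (if s = (3) then tab2_SL_p3 m else (if s = (4) then tab2_SL_p4 m else (if s = (5) then tab2_SL_p5 m else (1,0)))))))))))"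
definition tab2_SS_m4 :: "int \<Rightarrow> int \<times> int" where "tab2_SS_m4 m = (if m = (-1) then ((-7),(-7)) else (if m = (0) then ((-7),(-7)) else (if m = (1) then ((-7),(-6)) else (if m = (2) then ((-7),(-6)) else (1,0)))))"
definition tab2_SS_m3 :: "int \<Rightarrow> int \<times> int" where "tab2_SS_m3 m = (if m = (-3) then ((-7),(-7)) else (if m = (-2) then ((-7),(-5)) else (if m = (-1) then ((-7),(-4)) else (if m = (0) then ((-7),(-4)) else (if m = (1) then ((-7),(-3)) else (if m = (2) then ((-7),(-3)) else (1,0)))))))"
definition tab2_SS_m2 :: "int \<Rightarrow> int \<times> int" where "tab2_SS_m2 m = (if m = (-4) then ((-7),(-7)) else (if m = (-3) then ((-7),(-5)) else (if m = (-2) then ((-7),(-3)) else (if m = (-1) then ((-7),(-2)) else (if m = (0) then ((-7),(-1)) else (if m = (1) then ((-7),(0)) else (if m = (2) then ((-7),(0)) else (1,0))))))))"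
definition tab2_SS_m1 :: "int \<Rightarrow> int \<times> int" where "tab2_SS_m1 m = (if m = (-4) then ((-7),(-5)) else (if m = (-3) then ((-7),(-2)) else (if m = (-2) then ((-7),(0)) else (if m = (-1) then ((-7),(1)) else (if m = (0) then ((-7),(2)) else (if m = (1) then ((-6),(3)) else (if m = (2) then ((-5),(3)) else (if m = (3) then ((-2),(4)) else (1,0)))))))))"
definition tab2_SS_p0 :: "int \<Rightarrow> int \<times> int" where "tab2_SS_p0 m = (if m = (-3) then ((-7),(0)) else (if m = (-2) then ((-6),(2)) else (if m = (-1) then ((-6),(4)) else (if m = (0) then ((-5),(5)) else (if m = (1) then ((-4),(6)) else (if m = (2) then ((-2),(6)) else (if m = (3) then ((0),(7)) else (1,0))))))))"
definition tab2_SS_p1 :: "int \<Rightarrow> int \<times> int" where "tab2_SS_p1 m = (if m = (-3) then ((-4),(2)) else (if m = (-2) then ((-3),(5)) else (if m = (-1) then ((-3),(6)) else (if m = (0) then ((-2),(7)) else (if m = (1) then ((-1),(7)) else (if m = (2) then ((0),(7)) else (if m = (3) then ((2),(7)) else (if m = (4) then ((5),(7)) else (1,0)))))))))"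
definition tab2_SS_p2 :: "int \<Rightarrow> int \<times> int" where "tab2_SS_p2 m = (if m = (-2) then ((0),(7)) else (if m = (-1) then ((0),(7)) else (if m = (0) then ((1),(7)) else (if m = (1) then ((2),(7)) else (if m = (2) then ((3),(7)) else (if m = (3) then ((5),(7)) else (if m = (4) then ((7),(7)) else (1,0))))))))"
definition tab2_SS_p3 :: "int \<Rightarrow> int \<times> int" where "tab2_SS_p3 m = (if m = (-2) then ((3),(7)) else (if m = (-1) then ((3),(7)) else (if m = (0) then ((4),(7)) else (if m = (1) then ((4),(7)) else (if m = (2) then ((5),(7)) else (if m = (3) then ((7),(7)) else (1,0)))))))"
definition tab2_SS_p4 :: "int \<Rightarrow> int \<times> int" where "tab2_SS_p4 m = (if m = (-2) then ((6),(7)) else (if m = (-1) then ((6),(7)) else (if m = (0) then ((7),(7)) else (if m = (1) then ((7),(7)) else (1,0)))))"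
definition tab2_SS :: "int \<Rightarrow> int \<Rightarrow> int \<times> int" where "tab2_SS s m = (if s = (-4) then tab2_SS_m4 m else (if s = (-3) then tab2_SS_m3 m else (if s = (-2) then tab2_SS_m2 m else (if s = (-1) then tab2_SS_m1 m else (if s = (0) then tab2_SS_p0 m else (if s = (1) then tab2_SS_p1 m else (if s = (2) then tab2_SS_p2 m else (if s = (3) then tab2_SS_p3 m else (if s = (4) then tab2_SS_p4 m else (1,0))))))))))"
definition tab2_SM_m3 :: "int \<Rightarrow> int \<times> int" where "tab2_SM_m3 m = (if m = (-2) then ((-7),(-7)) else (if m = (-1) then ((-7),(-6)) else (if m = (0) then ((-7),(-6)) else (if m = (1) then ((-7),(-5)) else (1,0)))))"
definition tab2_SM_m2 :: "int \<Rightarrow> int \<times> int" where "tab2_SM_m2 m = (if m = (-3) then ((-7),(-6)) else (if m = (-2) then ((-7),(-4)) else (if m = (-1) then ((-7),(-3)) else (if m = (0) then ((-7),(-3)) else (if m = (1) then ((-7),(-2)) else (1,0))))))"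
definition tab2_SM_m1 :: "int \<Rightarrow> int \<times> int" where "tab2_SM_m1 m = (if m = (-4) then ((-7),(-6)) else (if m = (-3) then ((-7),(-4)) else (if m = (-2) then ((-7),(-2)) else (if m = (-1) then ((-7),(-1)) else (if m = (0) then ((-7),(0)) else (if m = (1) then ((-7),(1)) else (if m = (2) then ((-4),(1)) else (1,0))))))))"
definition tab2_SM_p0 :: "int \<Rightarrow> int \<times> int" where "tab2_SM_p0 m = (if m = (-4) then ((-7),(-4)) else (if m = (-3) then ((-7),(-1)) else (if m = (-2) then ((-7),(1)) else (if m = (-1) then ((-7),(2)) else (if m = (0) then ((-6),(3)) else (if m = (1) then ((-5),(4)) else (if m = (2) then ((-2),(4)) else (1,0))))))))"
definition tab2_SM_p1 :: "int \<Rightarrow> int \<times> int" where "tab2_SM_p1 m = (if m = (-3) then ((-6),(1)) else (if m = (-2) then ((-5),(3)) else (if m = (-1) then ((-5),(5)) else (if m = (0) then ((-4),(6)) else (if m = (1) then ((-2),(7)) else (if m = (2) then ((0),(7)) else (if m = (3) then ((3),(7)) else (1,0))))))))"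
definition tab2_SM_p2 :: "int \<Rightarrow> int \<times> int" where "tab2_SM_p2 m = (if m = (-3) then ((-3),(3)) else (if m = (-2) then ((-2),(6)) else (if m = (-1) then ((-2),(7)) else (if m = (0) then ((-1),(7)) else (if m = (1) then ((0),(7)) else (if m = (2) then ((2),(7)) else (if m = (3) then ((4),(7)) else (1,0))))))))"
definition tab2_SM_p3 :: "int \<Rightarrow> int \<times> int" where "tab2_SM_p3 m = (if m = (-2) then ((1),(7)) else (if m = (-1) then ((1),(7)) else (if m = (0) then ((2),(7)) else (if m = (1) then ((3),(7)) else (if m = (2) then ((5),(7)) else (if m = (3) then ((6),(7)) else (1,0)))))))"
definition tab2_SM_p4 :: "int \<Rightarrow> int \<times> int" where "tab2_SM_p4 m = (if m = (-2) then ((4),(7)) else (if m = (-1) then ((4),(7)) else (if m = (0) then ((5),(7)) else (if m = (1) then ((6),(7)) else (if m = (2) then ((7),(7)) else (1,0))))))"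
definition tab2_SM_p5 :: "int \<Rightarrow> int \<times> int" where "tab2_SM_p5 m = (if m = (-2) then ((7),(7)) else (if m = (-1) then ((7),(7)) else (1,0)))"
definition tab2_SM :: "int \<Rightarrow> int \<Rightarrow> int \<times> int" where "tab2_SM s m = (if s = (-3) then tab2_SM_m3 m else (if s = (-2) then tab2_SM_m2 m else (if s = (-1) then tab2_SM_m1 m else (if s = (0) then tab2_SM_p0 m else (if s = (1) then tab2_SM_p1 m else (if s = (2) then tab2_SM_p2 m else (if s = (3) then tab2_SM_p3 m else (if s = (4) then tab2_SM_p4 m else (if s = (5) then tab2_SM_p5 m else (1,0))))))))))"
definition tab2_ML_m4 :: "int \<Rightarrow> int \<times> int" where "tab2_ML_m4 m = (if m = (-1) then ((-7),(-7)) else (if m = (0) then ((-7),(-6)) else (if m = (1) then ((-7),(-5)) else (if m = (2) then ((-7),(-5)) else (1,0)))))"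
definition tab2_ML_m3 :: "int \<Rightarrow> int \<times> int" where "tab2_ML_m3 m = (if m = (-3) then ((-7),(-7)) else (if m = (-2) then ((-7),(-6)) else (if m = (-1) then ((-7),(-4)) else (if m = (0) then ((-7),(-3)) else (if m = (1) then ((-7),(-2)) else (if m = (2) then ((-7),(-2)) else (1,0)))))))"
definition tab2_ML_m2 :: "int \<Rightarrow> int \<times> int" where "tab2_ML_m2 m = (if m = (-3) then ((-7),(-5)) else (if m = (-2) then ((-7),(-3)) else (if m = (-1) then ((-7),(-1)) else (if m = (0) then ((-7),(0)) else (if m = (1) then ((-7),(1)) else (if m = (2) then ((-7),(1)) else (if m = (3) then ((-4),(2)) else (1,0))))))))"
definition tab2_ML_m1 :: "int \<Rightarrow> int \<times> int" where "tab2_ML_m1 m = (if m = (-3) then ((-7),(-4)) else (if m = (-2) then ((-7),(-1)) else (if m = (-1) then ((-7),(1)) else (if m = (0) then ((-7),(3)) else (if m = (1) then ((-6),(4)) else (if m = (2) then ((-5),(4)) else (if m = (3) then ((-2),(5)) else (1,0))))))))"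
definition tab2_ML_p0 :: "int \<Rightarrow> int \<times> int" where "tab2_ML_p0 m = (if m = (-2) then ((-6),(1)) else (if m = (-1) then ((-6),(4)) else (if m = (0) then ((-5),(5)) else (if m = (1) then ((-4),(7)) else (if m = (2) then ((-2),(7)) else (if m = (3) then ((0),(7)) else (if m = (4) then ((3),(7)) else (1,0))))))))"
definition tab2_ML_p1 :: "int \<Rightarrow> int \<times> int" where "tab2_ML_p1 m = (if m = (-2) then ((-3),(3)) else (if m = (-1) then ((-3),(6)) else (if m = (0) then ((-2),(7)) else (if m = (1) then ((-1),(7)) else (if m = (2) then ((0),(7)) else (if m = (3) then ((2),(7)) else (if m = (4) then ((4),(7)) else (1,0))))))))"
definition tab2_ML_p2 :: "int \<Rightarrow> int \<times> int" where "tab2_ML_p2 m = (if m = (-1) then ((0),(7)) else (if m = (0) then ((1),(7)) else (if m = (1) then ((2),(7)) else (if m = (2) then ((3),(7)) else (if m = (3) then ((5),(7)) else (if m = (4) then ((6),(7)) else (1,0)))))))"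
definition tab2_ML_p3 :: "int \<Rightarrow> int \<times> int" where "tab2_ML_p3 m = (if m = (-1) then ((3),(7)) else (if m = (0) then ((4),(7)) else (if m = (1) then ((4),(7)) else (if m = (2) then ((5),(7)) else (if m = (3) then ((7),(7)) else (1,0))))))"
definition tab2_ML_p4 :: "int \<Rightarrow> int \<times> int" where "tab2_ML_p4 m = (if m = (-1) then ((6),(7)) else (if m = (0) then ((7),(7)) else (if m = (1) then ((7),(7)) else (1,0))))"
definition tab2_ML :: "int \<Rightarrow> int \<Rightarrow> int \<times> int" where "tab2_ML s m = (if s = (-4) then tab2_ML_m4 m else (if s = (-3) then tab2_ML_m3 m else (if s = (-2) then tab2_ML_m2 m else (if s = (-1) then tab2_ML_m1 m else (if s = (0) then tab2_ML_p0 m else (if s = (1) then tab2_ML_p1 m else (if s = (2) then tab2_ML_p2 m else (if s = (3) then tab2_ML_p3 m else (if s = (4) then tab2_ML_p4 m else (1,0))))))))))"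
definition tab2_MS_m5 :: "int \<Rightarrow> int \<times> int" where "tab2_MS_m5 m = (if m = (1) then ((-7),(-7)) else (if m = (2) then ((-7),(-7)) else (1,0)))"
definition tab2_MS_m4 :: "int \<Rightarrow> int \<times> int" where "tab2_MS_m4 m = (if m = (-2) then ((-7),(-7)) else (if m = (-1) then ((-7),(-6)) else (if m = (0) then ((-7),(-5)) else (if m = (1) then ((-7),(-4)) else (if m = (2) then ((-7),(-4)) else (1,0))))))"
definition tab2_MS_m3 :: "int \<Rightarrow> int \<times> int" where "tab2_MS_m3 m = (if m = (-3) then ((-7),(-6)) else (if m = (-2) then ((-7),(-5)) else (if m = (-1) then ((-7),(-3)) else (if m = (0) then ((-7),(-2)) else (if m = (1) then ((-7),(-1)) else (if m = (2) then ((-7),(-1)) else (1,0)))))))"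
definition tab2_MS_m2 :: "int \<Rightarrow> int \<times> int" where "tab2_MS_m2 m = (if m = (-3) then ((-7),(-4)) else (if m = (-2) then ((-7),(-2)) else (if m = (-1) then ((-7),(0)) else (if m = (0) then ((-7),(1)) else (if m = (1) then ((-7),(2)) else (if m = (2) then ((-6),(2)) else (if m = (3) then ((-3),(3)) else (1,0))))))))"
definition tab2_MS_m1 :: "int \<Rightarrow> int \<times> int" where "tab2_MS_m1 m = (if m = (-3) then ((-7),(-3)) else (if m = (-2) then ((-7),(0)) else (if m = (-1) then ((-7),(2)) else (if m = (0) then ((-6),(4)) else (if m = (1) then ((-5),(5)) else (if m = (2) then ((-3),(5)) else (if m = (3) then ((-1),(6)) else (1,0))))))))"
definition tab2_MS_p0 :: "int \<Rightarrow> int \<times> int" where "tab2_MS_p0 m = (if m = (-2) then ((-4),(2)) else (if m = (-1) then ((-4),(5)) else (if m = (0) then ((-3),(6)) else (if m = (1) then ((-2),(7)) else (if m = (2) then ((-1),(7)) else (if m = (3) then ((1),(7)) else (if m = (4) then ((4),(7)) else (1,0))))))))"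
definition tab2_MS_p1 :: "int \<Rightarrow> int \<times> int" where "tab2_MS_p1 m = (if m = (-2) then ((-1),(4)) else (if m = (-1) then ((-1),(7)) else (if m = (0) then ((0),(7)) else (if m = (1) then ((1),(7)) else (if m = (2) then ((2),(7)) else (if m = (3) then ((4),(7)) else (if m = (4) then ((6),(7)) else (1,0))))))))"
definition tab2_MS_p2 :: "int \<Rightarrow> int \<times> int" where "tab2_MS_p2 m = (if m = (-1) then ((2),(7)) else (if m = (0) then ((3),(7)) else (if m = (1) then ((3),(7)) else (if m = (2) then ((4),(7)) else (if m = (3) then ((6),(7)) else (1,0))))))"
definition tab2_MS_p3 :: "int \<Rightarrow> int \<times> int" where "tab2_MS_p3 m = (if m = (-1) then ((5),(7)) else (if m = (0) then ((6),(7)) else (if m = (1) then ((6),(7)) else (if m = (2) then ((7),(7)) else (1,0)))))"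
definition tab2_MS :: "int \<Rightarrow> int \<Rightarrow> int \<times> int" where "tab2_MS s m = (if s = (-5) then tab2_MS_m5 m else (if s = (-4) then tab2_MS_m4 m else (if s = (-3) then tab2_MS_m3 m else (if s = (-2) then tab2_MS_m2 m else (if s = (-1) then tab2_MS_m1 m else (if s = (0) then tab2_MS_p0 m else (if s = (1) then tab2_MS_p1 m else (if s = (2) then tab2_MS_p2 m else (if s = (3) then tab2_MS_p3 m else (1,0))))))))))"
definition tab2_MM_m4 :: "int \<Rightarrow> int \<times> int" where "tab2_MM_m4 m = (if m = (-1) then ((-7),(-7)) else (if m = (0) then ((-7),(-7)) else (if m = (1) then ((-7),(-6)) else (1,0))))"
definition tab2_MM_m3 :: "int \<Rightarrow> int \<times> int" where "tab2_MM_m3 m = (if m = (-2) then ((-7),(-6)) else (if m = (-1) then ((-7),(-5)) else (if m = (0) then ((-7),(-4)) else (if m = (1) then ((-7),(-3)) else (1,0)))))"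
definition tab2_MM_m2 :: "int \<Rightarrow> int \<times> int" where "tab2_MM_m2 m = (if m = (-3) then ((-7),(-5)) else (if m = (-2) then ((-7),(-4)) else (if m = (-1) then ((-7),(-2)) else (if m = (0) then ((-7),(-1)) else (if m = (1) then ((-7),(0)) else (if m = (2) then ((-5),(0)) else (1,0)))))))"
definition tab2_MM_m1 :: "int \<Rightarrow> int \<times> int" where "tab2_MM_m1 m = (if m = (-3) then ((-7),(-3)) else (if m = (-2) then ((-7),(-1)) else (if m = (-1) then ((-7),(1)) else (if m = (0) then ((-7),(2)) else (if m = (1) then ((-6),(3)) else (if m = (2) then ((-3),(3)) else (1,0)))))))"
definition tab2_MM_p0 :: "int \<Rightarrow> int \<times> int" where "tab2_MM_p0 m = (if m = (-3) then ((-7),(-2)) else (if m = (-2) then ((-6),(1)) else (if m = (-1) then ((-6),(3)) else (if m = (0) then ((-5),(5)) else (if m = (1) then ((-3),(6)) else (if m = (2) then ((-1),(6)) else (if m = (3) then ((2),(7)) else (1,0))))))))"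
definition tab2_MM_p1 :: "int \<Rightarrow> int \<times> int" where "tab2_MM_p1 m = (if m = (-2) then ((-3),(3)) else (if m = (-1) then ((-3),(6)) else (if m = (0) then ((-2),(7)) else (if m = (1) then ((-1),(7)) else (if m = (2) then ((1),(7)) else (if m = (3) then ((3),(7)) else (1,0)))))))"
definition tab2_MM_p2 :: "int \<Rightarrow> int \<times> int" where "tab2_MM_p2 m = (if m = (-2) then ((0),(5)) else (if m = (-1) then ((0),(7)) else (if m = (0) then ((1),(7)) else (if m = (1) then ((2),(7)) else (if m = (2) then ((4),(7)) else (if m = (3) then ((5),(7)) else (1,0)))))))"
definition tab2_MM_p3 :: "int \<Rightarrow> int \<times> int" where "tab2_MM_p3 m = (if m = (-1) then ((3),(7)) else (if m = (0) then ((4),(7)) else (if m = (1) then ((5),(7)) else (if m = (2) then ((6),(7)) else (1,0)))))"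
definition tab2_MM_p4 :: "int \<Rightarrow> int \<times> int" where "tab2_MM_p4 m = (if m = (-1) then ((6),(7)) else (if m = (0) then ((7),(7)) else (if m = (1) then ((7),(7)) else (1,0))))"
definition tab2_MM :: "int \<Rightarrow> int \<Rightarrow> int \<times> int" where "tab2_MM s m = (if s = (-4) then tab2_MM_m4 m else (if s = (-3) then tab2_MM_m3 m else (if s = (-2) then tab2_MM_m2 m else (if s = (-1) then tab2_MM_m1 m else (if s = (0) then tab2_MM_p0 m else (if s = (1) then tab2_MM_p1 m else (if s = (2) then tab2_MM_p2 m else (if s = (3) then tab2_MM_p3 m else (if s = (4) then tab2_MM_p4 m else (1,0))))))))))"
definition tab2_L :: "letter \<Rightarrow> int \<Rightarrow> int \<Rightarrow> int \<times> int" where "tab2_L c3 = (case c3 of L \<Rightarrow> tab2_LL | S \<Rightarrow> tab2_LS | M \<Rightarrow> tab2_LM)"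
definition tab2_S :: "letter \<Rightarrow> int \<Rightarrow> int \<Rightarrow> int \<times> int" where "tab2_S c3 = (case c3 of L \<Rightarrow> tab2_SL | S \<Rightarrow> tab2_SS | M \<Rightarrow> tab2_SM)"
definition tab2_M :: "letter \<Rightarrow> int \<Rightarrow> int \<Rightarrow> int \<times> int" where "tab2_M c3 = (case c3 of L \<Rightarrow> tab2_ML | S \<Rightarrow> tab2_MS | M \<Rightarrow> tab2_MM)"
definition tab2 :: "letter \<Rightarrow> letter \<Rightarrow> int \<Rightarrow> int \<Rightarrow> int \<times> int" where "tab2 c1 = (case c1 of L \<Rightarrow> tab2_L | S \<Rightarrow> tab2_S | M \<Rightarrow> tab2_M)"

definition tab3_LL_m3 :: "int \<Rightarrow> int \<times> int" where "tab3_LL_m3 m = (if m = (-2) then ((-6),(-6)) else (if m = (-1) then ((-6),(-5)) else (if m = (0) then ((-6),(-4)) else (if m = (1) then ((-6),(-4)) else (if m = (2) then ((-6),(-3)) else (1,0))))))"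
definition tab3_LL_m2 :: "int \<Rightarrow> int \<times> int" where "tab3_LL_m2 m = (if m = (-3) then ((-6),(-5)) else (if m = (-2) then ((-6),(-3)) else (if m = (-1) then ((-6),(-1)) else (if m = (0) then ((-6),(0)) else (if m = (1) then ((-6),(0)) else (if m = (2) then ((-6),(1)) else (1,0)))))))"
definition tab3_LL_m1 :: "int \<Rightarrow> int \<times> int" where "tab3_LL_m1 m = (if m = (-3) then ((-6),(-2)) else (if m = (-2) then ((-6),(1)) else (if m = (-1) then ((-6),(3)) else (if m = (0) then ((-6),(4)) else (if m = (1) then ((-6),(4)) else (if m = (2) then ((-6),(5)) else (1,0)))))))"
definition tab3_LL_p0 :: "int \<Rightarrow> int \<times> int" where "tab3_LL_p0 m = (if m = (-3) then ((-6),(0)) else (if m = (-2) then ((-6),(4)) else (if m = (-1) then ((-6),(6)) else (if m = (0) then ((-6),(6)) else (if m = (1) then ((-6),(6)) else (if m = (2) then ((-4),(6)) else (if m = (3) then ((0),(6)) else (1,0))))))))"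
definition tab3_LL_p1 :: "int \<Rightarrow> int \<times> int" where "tab3_LL_p1 m = (if m = (-2) then ((-5),(6)) else (if m = (-1) then ((-4),(6)) else (if m = (0) then ((-4),(6)) else (if m = (1) then ((-3),(6)) else (if m = (2) then ((-1),(6)) else (if m = (3) then ((2),(6)) else (1,0)))))))"
definition tab3_LL_p2 :: "int \<Rightarrow> int \<times> int" where "tab3_LL_p2 m = (if m = (-2) then ((-1),(6)) else (if m = (-1) then ((0),(6)) else (if m = (0) then ((0),(6)) else (if m = (1) then ((1),(6)) else (if m = (2) then ((3),(6)) else (if m = (3) then ((5),(6)) else (1,0)))))))"
definition tab3_LL_p3 :: "int \<Rightarrow> int \<times> int" where "tab3_LL_p3 m = (if m = (-2) then ((3),(6)) else (if m = (-1) then ((4),(6)) else (if m = (0) then ((4),(6)) else (if m = (1) then ((5),(6)) else (if m = (2) then ((6),(6)) else (1,0))))))"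
definition tab3_LL :: "int \<Rightarrow> int \<Rightarrow> int \<times> int" where "tab3_LL s m = (if s = (-3) then tab3_LL_m3 m else (if s = (-2) then tab3_LL_m2 m else (if s = (-1) then tab3_LL_m1 m else (if s = (0) then tab3_LL_p0 m else (if s = (1) then tab3_LL_p1 m else (if s = (2) then tab3_LL_p2 m else (if s = (3) then tab3_LL_p3 m else (1,0))))))))"
definition tab3_LS_m3 :: "int \<Rightarrow> int \<times> int" where "tab3_LS_m3 m = (if m = (-2) then ((-6),(-5)) else (if m = (-1) then ((-6),(-4)) else (if m = (0) then ((-6),(-3)) else (if m = (1) then ((-6),(-3)) else (if m = (2) then ((-6),(-2)) else (1,0))))))"
definition tab3_LS_m2 :: "int \<Rightarrow> int \<times> int" where "tab3_LS_m2 m = (if m = (-3) then ((-6),(-4)) else (if m = (-2) then ((-6),(-2)) else (if m = (-1) then ((-6),(0)) else (if m = (0) then ((-6),(1)) else (if m = (1) then ((-6),(1)) else (if m = (2) then ((-6),(2)) else (1,0)))))))"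
definition tab3_LS_m1 :: "int \<Rightarrow> int \<times> int" where "tab3_LS_m1 m = (if m = (-3) then ((-6),(-1)) else (if m = (-2) then ((-6),(2)) else (if m = (-1) then ((-6),(4)) else (if m = (0) then ((-6),(5)) else (if m = (1) then ((-6),(5)) else (if m = (2) then ((-5),(6)) else (1,0)))))))"
definition tab3_LS_p0 :: "int \<Rightarrow> int \<times> int" where "tab3_LS_p0 m = (if m = (-3) then ((-6),(1)) else (if m = (-2) then ((-6),(5)) else (if m = (-1) then ((-5),(6)) else (if m = (0) then ((-5),(6)) else (if m = (1) then ((-4),(6)) else (if m = (2) then ((-2),(6)) else (if m = (3) then ((2),(6)) else (1,0))))))))"
definition tab3_LS_p1 :: "int \<Rightarrow> int \<times> int" where "tab3_LS_p1 m = (if m = (-2) then ((-2),(6)) else (if m = (-1) then ((-1),(6)) else (if m = (0) then ((-1),(6)) else (if m = (1) then ((0),(6)) else (if m = (2) then ((2),(6)) else (if m = (3) then ((4),(6)) else (1,0)))))))"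
definition tab3_LS_p2 :: "int \<Rightarrow> int \<times> int" where "tab3_LS_p2 m = (if m = (-2) then ((2),(6)) else (if m = (-1) then ((3),(6)) else (if m = (0) then ((3),(6)) else (if m = (1) then ((4),(6)) else (if m = (2) then ((5),(6)) else (1,0))))))"
definition tab3_LS_p3 :: "int \<Rightarrow> int \<times> int" where "tab3_LS_p3 m = (if m = (-2) then ((6),(6)) else (1,0))"
definition tab3_LS :: "int \<Rightarrow> int \<Rightarrow> int \<times> int" where "tab3_LS s m = (if s = (-3) then tab3_LS_m3 m else (if s = (-2) then tab3_LS_m2 m else (if s = (-1) then tab3_LS_m1 m else (if s = (0) then tab3_LS_p0 m else (if s = (1) then tab3_LS_p1 m else (if s = (2) then tab3_LS_p2 m else (if s = (3) then tab3_LS_p3 m else (1,0))))))))"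
definition tab3_LM_m3 :: "int \<Rightarrow> int \<times> int" where "tab3_LM_m3 m = (if m = (0) then ((-6),(-6)) else (if m = (1) then ((-6),(-6)) else (1,0)))"
definition tab3_LM_m2 :: "int \<Rightarrow> int \<times> int" where "tab3_LM_m2 m = (if m = (-3) then ((-6),(-6)) else (if m = (-2) then ((-6),(-4)) else (if m = (-1) then ((-6),(-3)) else (if m = (0) then ((-6),(-2)) else (if m = (1) then ((-6),(-2)) else (1,0))))))"
definition tab3_LM_m1 :: "int \<Rightarrow> int \<times> int" where "tab3_LM_m1 m = (if m = (-3) then ((-6),(-3)) else (if m = (-2) then ((-6),(-1)) else (if m = (-1) then ((-6),(1)) else (if m = (0) then ((-6),(2)) else (if m = (1) then ((-6),(2)) else (1,0))))))"
definition tab3_LM_p0 :: "int \<Rightarrow> int \<times> int" where "tab3_LM_p0 m = (if m = (-3) then ((-6),(0)) else (if m = (-2) then ((-6),(3)) else (if m = (-1) then ((-6),(5)) else (if m = (0) then ((-6),(6)) else (if m = (1) then ((-5),(6)) else (if m = (2) then ((-1),(6)) else (1,0)))))))"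
definition tab3_LM_p1 :: "int \<Rightarrow> int \<times> int" where "tab3_LM_p1 m = (if m = (-3) then ((-6),(2)) else (if m = (-2) then ((-5),(6)) else (if m = (-1) then ((-4),(6)) else (if m = (0) then ((-3),(6)) else (if m = (1) then ((-2),(6)) else (if m = (2) then ((1),(6)) else (1,0)))))))"
definition tab3_LM_p2 :: "int \<Rightarrow> int \<times> int" where "tab3_LM_p2 m = (if m = (-2) then ((-1),(6)) else (if m = (-1) then ((0),(6)) else (if m = (0) then ((0),(6)) else (if m = (1) then ((2),(6)) else (if m = (2) then ((4),(6)) else (1,0))))))"
definition tab3_LM_p3 :: "int \<Rightarrow> int \<times> int" where "tab3_LM_p3 m = (if m = (-2) then ((3),(6)) else (if m = (-1) then ((4),(6)) else (if m = (0) then ((4),(6)) else (if m = (1) then ((5),(6)) else (1,0)))))"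
definition tab3_LM :: "int \<Rightarrow> int \<Rightarrow> int \<times> int" where "tab3_LM s m = (if s = (-3) then tab3_LM_m3 m else (if s = (-2) then tab3_LM_m2 m else (if s = (-1) then tab3_LM_m1 m else (if s = (0) then tab3_LM_p0 m else (if s = (1) then tab3_LM_p1 m else (if s = (2) then tab3_LM_p2 m else (if s = (3) then tab3_LM_p3 m else (1,0))))))))"
definition tab3_SL_m3 :: "int \<Rightarrow> int \<times> int" where "tab3_SL_m3 m = (if m = (2) then ((-6),(-6)) else (1,0))"
definition tab3_SL_m2 :: "int \<Rightarrow> int \<times> int" where "tab3_SL_m2 m = (if m = (-2) then ((-6),(-5)) else (if m = (-1) then ((-6),(-4)) else (if m = (0) then ((-6),(-3)) else (if m = (1) then ((-6),(-3)) else (if m = (2) then ((-6),(-2)) else (1,0))))))"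
definition tab3_SL_m1 :: "int \<Rightarrow> int \<times> int" where "tab3_SL_m1 m = (if m = (-3) then ((-6),(-4)) else (if m = (-2) then ((-6),(-2)) else (if m = (-1) then ((-6),(0)) else (if m = (0) then ((-6),(1)) else (if m = (1) then ((-6),(1)) else (if m = (2) then ((-6),(2)) else (1,0)))))))"
definition tab3_SL_p0 :: "int \<Rightarrow> int \<times> int" where "tab3_SL_p0 m = (if m = (-3) then ((-6),(-2)) else (if m = (-2) then ((-6),(2)) else (if m = (-1) then ((-6),(4)) else (if m = (0) then ((-6),(5)) else (if m = (1) then ((-6),(5)) else (if m = (2) then ((-5),(6)) else (if m = (3) then ((-1),(6)) else (1,0))))))))"
definition tab3_SL_p1 :: "int \<Rightarrow> int \<times> int" where "tab3_SL_p1 m = (if m = (-2) then ((-6),(5)) else (if m = (-1) then ((-5),(6)) else (if m = (0) then ((-5),(6)) else (if m = (1) then ((-4),(6)) else (if m = (2) then ((-2),(6)) else (if m = (3) then ((1),(6)) else (1,0)))))))"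
definition tab3_SL_p2 :: "int \<Rightarrow> int \<times> int" where "tab3_SL_p2 m = (if m = (-2) then ((-2),(6)) else (if m = (-1) then ((-1),(6)) else (if m = (0) then ((-1),(6)) else (if m = (1) then ((0),(6)) else (if m = (2) then ((2),(6)) else (if m = (3) then ((4),(6)) else (1,0)))))))"
definition tab3_SL_p3 :: "int \<Rightarrow> int \<times> int" where "tab3_SL_p3 m = (if m = (-2) then ((2),(6)) else (if m = (-1) then ((3),(6)) else (if m = (0) then ((3),(6)) else (if m = (1) then ((4),(6)) else (if m = (2) then ((5),(6)) else (1,0))))))"
definition tab3_SL :: "int \<Rightarrow> int \<Rightarrow> int \<times> int" where "tab3_SL s m = (if s = (-3) then tab3_SL_m3 m else (if s = (-2) then tab3_SL_m2 m else (if s = (-1) then tab3_SL_m1 m else (if s = (0) then tab3_SL_p0 m else (if s = (1) then tab3_SL_p1 m else (if s = (2) then tab3_SL_p2 m else (if s = (3) then tab3_SL_p3 m else (1,0))))))))"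
definition tab3_SS_m3 :: "int \<Rightarrow> int \<times> int" where "tab3_SS_m3 m = (if m = (0) then ((-6),(-6)) else (if m = (1) then ((-6),(-6)) else (if m = (2) then ((-6),(-5)) else (1,0))))"
definition tab3_SS_m2 :: "int \<Rightarrow> int \<times> int" where "tab3_SS_m2 m = (if m = (-3) then ((-6),(-6)) else (if m = (-2) then ((-6),(-4)) else (if m = (-1) then ((-6),(-3)) else (if m = (0) then ((-6),(-2)) else (if m = (1) then ((-6),(-2)) else (if m = (2) then ((-6),(-1)) else (1,0)))))))"
definition tab3_SS_m1 :: "int \<Rightarrow> int \<times> int" where "tab3_SS_m1 m = (if m = (-3) then ((-6),(-3)) else (if m = (-2) then ((-6),(-1)) else (if m = (-1) then ((-6),(1)) else (if m = (0) then ((-6),(2)) else (if m = (1) then ((-6),(2)) else (if m = (2) then ((-6),(3)) else (1,0)))))))"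
definition tab3_SS_p0 :: "int \<Rightarrow> int \<times> int" where "tab3_SS_p0 m = (if m = (-3) then ((-6),(-1)) else (if m = (-2) then ((-6),(3)) else (if m = (-1) then ((-6),(5)) else (if m = (0) then ((-6),(6)) else (if m = (1) then ((-5),(6)) else (if m = (2) then ((-3),(6)) else (if m = (3) then ((1),(6)) else (1,0))))))))"
definition tab3_SS_p1 :: "int \<Rightarrow> int \<times> int" where "tab3_SS_p1 m = (if m = (-2) then ((-3),(6)) else (if m = (-1) then ((-2),(6)) else (if m = (0) then ((-2),(6)) else (if m = (1) then ((-1),(6)) else (if m = (2) then ((1),(6)) else (if m = (3) then ((3),(6)) else (1,0)))))))"
definition tab3_SS_p2 :: "int \<Rightarrow> int \<times> int" where "tab3_SS_p2 m = (if m = (-2) then ((1),(6)) else (if m = (-1) then ((2),(6)) else (if m = (0) then ((2),(6)) else (if m = (1) then ((3),(6)) else (if m = (2) then ((4),(6)) else (if m = (3) then ((6),(6)) else (1,0)))))))"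
definition tab3_SS_p3 :: "int \<Rightarrow> int \<times> int" where "tab3_SS_p3 m = (if m = (-2) then ((5),(6)) else (if m = (-1) then ((6),(6)) else (if m = (0) then ((6),(6)) else (1,0))))"
definition tab3_SS :: "int \<Rightarrow> int \<Rightarrow> int \<times> int" where "tab3_SS s m = (if s = (-3) then tab3_SS_m3 m else (if s = (-2) then tab3_SS_m2 m else (if s = (-1) then tab3_SS_m1 m else (if s = (0) then tab3_SS_p0 m else (if s = (1) then tab3_SS_p1 m else (if s = (2) then tab3_SS_p2 m else (if s = (3) then tab3_SS_p3 m else (1,0))))))))"
definition tab3_SM_m2 :: "int \<Rightarrow> int \<times> int" where "tab3_SM_m2 m = (if m = (-1) then ((-6),(-6)) else (if m = (0) then ((-6),(-5)) else (if m = (1) then ((-6),(-5)) else (1,0))))"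
definition tab3_SM_m1 :: "int \<Rightarrow> int \<times> int" where "tab3_SM_m1 m = (if m = (-3) then ((-6),(-5)) else (if m = (-2) then ((-6),(-3)) else (if m = (-1) then ((-6),(-2)) else (if m = (0) then ((-6),(-1)) else (if m = (1) then ((-6),(-1)) else (1,0))))))"
definition tab3_SM_p0 :: "int \<Rightarrow> int \<times> int" where "tab3_SM_p0 m = (if m = (-3) then ((-6),(-2)) else (if m = (-2) then ((-6),(0)) else (if m = (-1) then ((-6),(2)) else (if m = (0) then ((-6),(3)) else (if m = (1) then ((-6),(3)) else (if m = (2) then ((-2),(4)) else (1,0)))))))"
definition tab3_SM_p1 :: "int \<Rightarrow> int \<times> int" where "tab3_SM_p1 m = (if m = (-3) then ((-6),(0)) else (if m = (-2) then ((-6),(4)) else (if m = (-1) then ((-5),(6)) else (if m = (0) then ((-4),(6)) else (if m = (1) then ((-3),(6)) else (if m = (2) then ((0),(6)) else (1,0)))))))"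
definition tab3_SM_p2 :: "int \<Rightarrow> int \<times> int" where "tab3_SM_p2 m = (if m = (-2) then ((-2),(6)) else (if m = (-1) then ((-1),(6)) else (if m = (0) then ((-1),(6)) else (if m = (1) then ((1),(6)) else (if m = (2) then ((3),(6)) else (1,0))))))"
definition tab3_SM_p3 :: "int \<Rightarrow> int \<times> int" where "tab3_SM_p3 m = (if m = (-2) then ((2),(6)) else (if m = (-1) then ((3),(6)) else (if m = (0) then ((3),(6)) else (if m = (1) then ((4),(6)) else (if m = (2) then ((6),(6)) else (1,0))))))"
definition tab3_SM_p4 :: "int \<Rightarrow> int \<times> int" where "tab3_SM_p4 m = (if m = (-2) then ((6),(6)) else (1,0))"
definition tab3_SM :: "int \<Rightarrow> int \<Rightarrow> int \<times> int" where "tab3_SM s m = (if s = (-2) then tab3_SM_m2 m else (if s = (-1) then tab3_SM_m1 m else (if s = (0) then tab3_SM_p0 m else (if s = (1) then tab3_SM_p1 m else (if s = (2) then tab3_SM_p2 m else (if s = (3) then tab3_SM_p3 m else (if s = (4) then tab3_SM_p4 m else (1,0))))))))"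
definition tab3_ML_m3 :: "int \<Rightarrow> int \<times> int" where "tab3_ML_m3 m = (if m = (-1) then ((-6),(-5)) else (if m = (0) then ((-6),(-4)) else (if m = (1) then ((-6),(-4)) else (if m = (2) then ((-6),(-3)) else (1,0)))))"
definition tab3_ML_m2 :: "int \<Rightarrow> int \<times> int" where "tab3_ML_m2 m = (if m = (-2) then ((-6),(-4)) else (if m = (-1) then ((-6),(-2)) else (if m = (0) then ((-6),(0)) else (if m = (1) then ((-6),(0)) else (if m = (2) then ((-6),(1)) else (1,0))))))"
definition tab3_ML_m1 :: "int \<Rightarrow> int \<times> int" where "tab3_ML_m1 m = (if m = (-2) then ((-6),(-1)) else (if m = (-1) then ((-6),(2)) else (if m = (0) then ((-6),(3)) else (if m = (1) then ((-6),(4)) else (if m = (2) then ((-6),(5)) else (if m = (3) then ((-2),(6)) else (1,0)))))))"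
definition tab3_ML_p0 :: "int \<Rightarrow> int \<times> int" where "tab3_ML_p0 m = (if m = (-2) then ((-6),(1)) else (if m = (-1) then ((-6),(5)) else (if m = (0) then ((-6),(6)) else (if m = (1) then ((-5),(6)) else (if m = (2) then ((-3),(6)) else (if m = (3) then ((0),(6)) else (1,0)))))))"
definition tab3_ML_p1 :: "int \<Rightarrow> int \<times> int" where "tab3_ML_p1 m = (if m = (-1) then ((-2),(6)) else (if m = (0) then ((-2),(6)) else (if m = (1) then ((-1),(6)) else (if m = (2) then ((1),(6)) else (if m = (3) then ((3),(6)) else (1,0))))))"
definition tab3_ML_p2 :: "int \<Rightarrow> int \<times> int" where "tab3_ML_p2 m = (if m = (-1) then ((2),(6)) else (if m = (0) then ((2),(6)) else (if m = (1) then ((3),(6)) else (if m = (2) then ((4),(6)) else (if m = (3) then ((6),(6)) else (1,0))))))"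
definition tab3_ML_p3 :: "int \<Rightarrow> int \<times> int" where "tab3_ML_p3 m = (if m = (-1) then ((6),(6)) else (if m = (0) then ((6),(6)) else (1,0)))"
definition tab3_ML :: "int \<Rightarrow> int \<Rightarrow> int \<times> int" where "tab3_ML s m = (if s = (-3) then tab3_ML_m3 m else (if s = (-2) then tab3_ML_m2 m else (if s = (-1) then tab3_ML_m1 m else (if s = (0) then tab3_ML_p0 m else (if s = (1) then tab3_ML_p1 m else (if s = (2) then tab3_ML_p2 m else (if s = (3) then tab3_ML_p3 m else (1,0))))))))"
definition tab3_MS_m4 :: "int \<Rightarrow> int \<times> int" where "tab3_MS_m4 m = (if m = (2) then ((-6),(-6)) else (1,0))"
definition tab3_MS_m3 :: "int \<Rightarrow> int \<times> int" where "tab3_MS_m3 m = (if m = (-2) then ((-6),(-6)) else (if m = (-1) then ((-6),(-4)) else (if m = (0) then ((-6),(-3)) else (if m = (1) then ((-6),(-3)) else (if m = (2) then ((-6),(-2)) else (1,0))))))"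
definition tab3_MS_m2 :: "int \<Rightarrow> int \<times> int" where "tab3_MS_m2 m = (if m = (-2) then ((-6),(-3)) else (if m = (-1) then ((-6),(-1)) else (if m = (0) then ((-6),(1)) else (if m = (1) then ((-6),(1)) else (if m = (2) then ((-6),(2)) else (1,0))))))"
definition tab3_MS_m1 :: "int \<Rightarrow> int \<times> int" where "tab3_MS_m1 m = (if m = (-2) then ((-6),(0)) else (if m = (-1) then ((-6),(3)) else (if m = (0) then ((-6),(4)) else (if m = (1) then ((-6),(5)) else (if m = (2) then ((-4),(6)) else (if m = (3) then ((0),(6)) else (1,0)))))))"
definition tab3_MS_p0 :: "int \<Rightarrow> int \<times> int" where "tab3_MS_p0 m = (if m = (-2) then ((-4),(2)) else (if m = (-1) then ((-3),(6)) else (if m = (0) then ((-3),(6)) else (if m = (1) then ((-2),(6)) else (if m = (2) then ((0),(6)) else (if m = (3) then ((2),(6)) else (1,0)))))))"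
definition tab3_MS_p1 :: "int \<Rightarrow> int \<times> int" where "tab3_MS_p1 m = (if m = (-1) then ((1),(6)) else (if m = (0) then ((1),(6)) else (if m = (1) then ((2),(6)) else (if m = (2) then ((3),(6)) else (if m = (3) then ((5),(6)) else (1,0))))))"
definition tab3_MS_p2 :: "int \<Rightarrow> int \<times> int" where "tab3_MS_p2 m = (if m = (-1) then ((5),(6)) else (if m = (0) then ((5),(6)) else (if m = (1) then ((6),(6)) else (1,0))))"
definition tab3_MS :: "int \<Rightarrow> int \<Rightarrow> int \<times> int" where "tab3_MS s m = (if s = (-4) then tab3_MS_m4 m else (if s = (-3) then tab3_MS_m3 m else (if s = (-2) then tab3_MS_m2 m else (if s = (-1) then tab3_MS_m1 m else (if s = (0) then tab3_MS_p0 m else (if s = (1) then tab3_MS_p1 m else (if s = (2) then tab3_MS_p2 m else (1,0))))))))"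
definition tab3_MM_m3 :: "int \<Rightarrow> int \<times> int" where "tab3_MM_m3 m = (if m = (0) then ((-6),(-6)) else (if m = (1) then ((-6),(-6)) else (1,0)))"
definition tab3_MM_m2 :: "int \<Rightarrow> int \<times> int" where "tab3_MM_m2 m = (if m = (-2) then ((-6),(-5)) else (if m = (-1) then ((-6),(-3)) else (if m = (0) then ((-6),(-2)) else (if m = (1) then ((-6),(-2)) else (1,0)))))"
definition tab3_MM_m1 :: "int \<Rightarrow> int \<times> int" where "tab3_MM_m1 m = (if m = (-2) then ((-6),(-2)) else (if m = (-1) then ((-6),(0)) else (if m = (0) then ((-6),(2)) else (if m = (1) then ((-6),(2)) else (if m = (2) then ((-3),(3)) else (1,0))))))"
definition tab3_MM_p0 :: "int \<Rightarrow> int \<times> int" where "tab3_MM_p0 m = (if m = (-2) then ((-6),(1)) else (if m = (-1) then ((-6),(4)) else (if m = (0) then ((-5),(5)) else (if m = (1) then ((-4),(6)) else (if m = (2) then ((-1),(6)) else (1,0))))))"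
definition tab3_MM_p1 :: "int \<Rightarrow> int \<times> int" where "tab3_MM_p1 m = (if m = (-2) then ((-3),(3)) else (if m = (-1) then ((-2),(6)) else (if m = (0) then ((-2),(6)) else (if m = (1) then ((0),(6)) else (if m = (2) then ((2),(6)) else (1,0))))))"
definition tab3_MM_p2 :: "int \<Rightarrow> int \<times> int" where "tab3_MM_p2 m = (if m = (-1) then ((2),(6)) else (if m = (0) then ((2),(6)) else (if m = (1) then ((3),(6)) else (if m = (2) then ((5),(6)) else (1,0)))))"
definition tab3_MM_p3 :: "int \<Rightarrow> int \<times> int" where "tab3_MM_p3 m = (if m = (-1) then ((6),(6)) else (if m = (0) then ((6),(6)) else (1,0)))"
definition tab3_MM :: "int \<Rightarrow> int \<Rightarrow> int \<times> int" where "tab3_MM s m = (if s = (-3) then tab3_MM_m3 m else (if s = (-2) then tab3_MM_m2 m else (if s = (-1) then tab3_MM_m1 m else (if s = (0) then tab3_MM_p0 m else (if s = (1) then tab3_MM_p1 m else (if s = (2) then tab3_MM_p2 m else (if s = (3) then tab3_MM_p3 m else (1,0))))))))"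
definition tab3_L :: "letter \<Rightarrow> int \<Rightarrow> int \<Rightarrow> int \<times> int" where "tab3_L c3 = (case c3 of L \<Rightarrow> tab3_LL | S \<Rightarrow> tab3_LS | M \<Rightarrow> tab3_LM)"
definition tab3_S :: "letter \<Rightarrow> int \<Rightarrow> int \<Rightarrow> int \<times> int" where "tab3_S c3 = (case c3 of L \<Rightarrow> tab3_SL | S \<Rightarrow> tab3_SS | M \<Rightarrow> tab3_SM)"
definition tab3_M :: "letter \<Rightarrow> int \<Rightarrow> int \<Rightarrow> int \<times> int" where "tab3_M c3 = (case c3 of L \<Rightarrow> tab3_ML | S \<Rightarrow> tab3_MS | M \<Rightarrow> tab3_MM)"
definition tab3 :: "letter \<Rightarrow> letter \<Rightarrow> int \<Rightarrow> int \<Rightarrow> int \<times> int" where "tab3 c1 = (case c1 of L \<Rightarrow> tab3_L | S \<Rightarrow> tab3_S | M \<Rightarrow> tab3_M)"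

definition tab4_LL_m3 :: "int \<Rightarrow> int \<times> int" where "tab4_LL_m3 m = (if m = (1) then ((-5),(-5)) else (if m = (2) then ((-5),(-4)) else (1,0)))"
definition tab4_LL_m2 :: "int \<Rightarrow> int \<times> int" where "tab4_LL_m2 m = (if m = (-2) then ((-5),(-3)) else (if m = (-1) then ((-5),(-1)) else (if m = (0) then ((-5),(-1)) else (if m = (1) then ((-5),(0)) else (if m = (2) then ((-5),(1)) else (1,0))))))"
definition tab4_LL_m1 :: "int \<Rightarrow> int \<times> int" where "tab4_LL_m1 m = (if m = (-3) then ((-5),(-3)) else (if m = (-2) then ((-5),(2)) else (if m = (-1) then ((-5),(3)) else (if m = (0) then ((-5),(4)) else (if m = (1) then ((-5),(5)) else (if m = (2) then ((-5),(5)) else (1,0)))))))"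
definition tab4_LL_p0 :: "int \<Rightarrow> int \<times> int" where "tab4_LL_p0 m = (if m = (-2) then ((-5),(5)) else (if m = (-1) then ((-5),(5)) else (if m = (0) then ((-5),(5)) else (if m = (1) then ((-5),(5)) else (if m = (2) then ((-5),(5)) else (1,0))))))"
definition tab4_LL_p1 :: "int \<Rightarrow> int \<times> int" where "tab4_LL_p1 m = (if m = (-2) then ((-5),(5)) else (if m = (-1) then ((-5),(5)) else (if m = (0) then ((-4),(5)) else (if m = (1) then ((-3),(5)) else (if m = (2) then ((-2),(5)) else (if m = (3) then ((3),(5)) else (1,0)))))))"
definition tab4_LL_p2 :: "int \<Rightarrow> int \<times> int" where "tab4_LL_p2 m = (if m = (-2) then ((-1),(5)) else (if m = (-1) then ((0),(5)) else (if m = (0) then ((1),(5)) else (if m = (1) then ((1),(5)) else (if m = (2) then ((3),(5)) else (1,0))))))"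
definition tab4_LL_p3 :: "int \<Rightarrow> int \<times> int" where "tab4_LL_p3 m = (if m = (-2) then ((4),(5)) else (if m = (-1) then ((5),(5)) else (1,0)))"
definition tab4_LL :: "int \<Rightarrow> int \<Rightarrow> int \<times> int" where "tab4_LL s m = (if s = (-3) then tab4_LL_m3 m else (if s = (-2) then tab4_LL_m2 m else (if s = (-1) then tab4_LL_m1 m else (if s = (0) then tab4_LL_p0 m else (if s = (1) then tab4_LL_p1 m else (if s = (2) then tab4_LL_p2 m else (if s = (3) then tab4_LL_p3 m else (1,0))))))))"
definition tab4_LS_m3 :: "int \<Rightarrow> int \<times> int" where "tab4_LS_m3 m = (if m = (-1) then ((-5),(-5)) else (if m = (0) then ((-5),(-5)) else (if m = (1) then ((-5),(-4)) else (if m = (2) then ((-5),(-3)) else (1,0)))))"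
definition tab4_LS_m2 :: "int \<Rightarrow> int \<times> int" where "tab4_LS_m2 m = (if m = (-2) then ((-5),(-2)) else (if m = (-1) then ((-5),(0)) else (if m = (0) then ((-5),(0)) else (if m = (1) then ((-5),(1)) else (if m = (2) then ((-5),(2)) else (1,0))))))"
definition tab4_LS_m1 :: "int \<Rightarrow> int \<times> int" where "tab4_LS_m1 m = (if m = (-3) then ((-5),(-2)) else (if m = (-2) then ((-5),(3)) else (if m = (-1) then ((-5),(4)) else (if m = (0) then ((-5),(5)) else (if m = (1) then ((-5),(5)) else (if m = (2) then ((-5),(5)) else (1,0)))))))"
definition tab4_LS_p0 :: "int \<Rightarrow> int \<times> int" where "tab4_LS_p0 m = (if m = (-2) then ((-5),(5)) else (if m = (-1) then ((-5),(5)) else (if m = (0) then ((-5),(5)) else (if m = (1) then ((-4),(5)) else (if m = (2) then ((-3),(5)) else (1,0))))))"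
definition tab4_LS_p1 :: "int \<Rightarrow> int \<times> int" where "tab4_LS_p1 m = (if m = (-2) then ((-2),(5)) else (if m = (-1) then ((-1),(5)) else (if m = (0) then ((0),(5)) else (if m = (1) then ((0),(5)) else (if m = (2) then ((2),(5)) else (1,0))))))"
definition tab4_LS_p2 :: "int \<Rightarrow> int \<times> int" where "tab4_LS_p2 m = (if m = (-2) then ((3),(5)) else (if m = (-1) then ((4),(5)) else (if m = (0) then ((5),(5)) else (if m = (1) then ((5),(5)) else (1,0)))))"
definition tab4_LS :: "int \<Rightarrow> int \<Rightarrow> int \<times> int" where "tab4_LS s m = (if s = (-3) then tab4_LS_m3 m else (if s = (-2) then tab4_LS_m2 m else (if s = (-1) then tab4_LS_m1 m else (if s = (0) then tab4_LS_p0 m else (if s = (1) then tab4_LS_p1 m else (if s = (2) then tab4_LS_p2 m else (1,0)))))))"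
definition tab4_LM_m2 :: "int \<Rightarrow> int \<times> int" where "tab4_LM_m2 m = (if m = (-1) then ((-5),(-4)) else (if m = (0) then ((-5),(-4)) else (if m = (1) then ((-5),(-3)) else (1,0))))"
definition tab4_LM_m1 :: "int \<Rightarrow> int \<times> int" where "tab4_LM_m1 m = (if m = (-3) then ((-5),(-5)) else (if m = (-2) then ((-5),(-1)) else (if m = (-1) then ((-5),(1)) else (if m = (0) then ((-5),(1)) else (if m = (1) then ((-5),(2)) else (1,0))))))"
definition tab4_LM_p0 :: "int \<Rightarrow> int \<times> int" where "tab4_LM_p0 m = (if m = (-3) then ((-5),(-1)) else (if m = (-2) then ((-5),(4)) else (if m = (-1) then ((-5),(5)) else (if m = (0) then ((-5),(5)) else (if m = (1) then ((-5),(5)) else (1,0))))))"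
definition tab4_LM_p1 :: "int \<Rightarrow> int \<times> int" where "tab4_LM_p1 m = (if m = (-2) then ((-5),(5)) else (if m = (-1) then ((-5),(5)) else (if m = (0) then ((-4),(5)) else (if m = (1) then ((-3),(5)) else (if m = (2) then ((2),(5)) else (1,0))))))"
definition tab4_LM_p2 :: "int \<Rightarrow> int \<times> int" where "tab4_LM_p2 m = (if m = (-2) then ((-1),(5)) else (if m = (-1) then ((0),(5)) else (if m = (0) then ((1),(5)) else (if m = (1) then ((2),(5)) else (1,0)))))"
definition tab4_LM_p3 :: "int \<Rightarrow> int \<times> int" where "tab4_LM_p3 m = (if m = (-2) then ((4),(5)) else (if m = (-1) then ((5),(5)) else (1,0)))"
definition tab4_LM :: "int \<Rightarrow> int \<Rightarrow> int \<times> int" where "tab4_LM s m = (if s = (-2) then tab4_LM_m2 m else (if s = (-1) then tab4_LM_m1 m else (if s = (0) then tab4_LM_p0 m else (if s = (1) then tab4_LM_p1 m else (if s = (2) then tab4_LM_p2 m else (if s = (3) then tab4_LM_p3 m else (1,0)))))))"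
definition tab4_SL_m2 :: "int \<Rightarrow> int \<times> int" where "tab4_SL_m2 m = (if m = (-1) then ((-5),(-5)) else (if m = (0) then ((-5),(-5)) else (if m = (1) then ((-5),(-4)) else (if m = (2) then ((-5),(-3)) else (1,0)))))"
definition tab4_SL_m1 :: "int \<Rightarrow> int \<times> int" where "tab4_SL_m1 m = (if m = (-2) then ((-5),(-2)) else (if m = (-1) then ((-5),(0)) else (if m = (0) then ((-5),(0)) else (if m = (1) then ((-5),(1)) else (if m = (2) then ((-5),(2)) else (1,0))))))"
definition tab4_SL_p0 :: "int \<Rightarrow> int \<times> int" where "tab4_SL_p0 m = (if m = (-2) then ((-5),(3)) else (if m = (-1) then ((-5),(4)) else (if m = (0) then ((-5),(5)) else (if m = (1) then ((-5),(5)) else (if m = (2) then ((-5),(5)) else (1,0))))))"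
definition tab4_SL_p1 :: "int \<Rightarrow> int \<times> int" where "tab4_SL_p1 m = (if m = (-2) then ((-5),(5)) else (if m = (-1) then ((-5),(5)) else (if m = (0) then ((-5),(5)) else (if m = (1) then ((-4),(5)) else (if m = (2) then ((-3),(5)) else (if m = (3) then ((2),(5)) else (1,0)))))))"
definition tab4_SL_p2 :: "int \<Rightarrow> int \<times> int" where "tab4_SL_p2 m = (if m = (-2) then ((-2),(5)) else (if m = (-1) then ((-1),(5)) else (if m = (0) then ((0),(5)) else (if m = (1) then ((0),(5)) else (if m = (2) then ((2),(5)) else (1,0))))))"
definition tab4_SL_p3 :: "int \<Rightarrow> int \<times> int" where "tab4_SL_p3 m = (if m = (-2) then ((3),(5)) else (if m = (-1) then ((4),(5)) else (if m = (0) then ((5),(5)) else (if m = (1) then ((5),(5)) else (1,0)))))"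
definition tab4_SL :: "int \<Rightarrow> int \<Rightarrow> int \<times> int" where "tab4_SL s m = (if s = (-2) then tab4_SL_m2 m else (if s = (-1) then tab4_SL_m1 m else (if s = (0) then tab4_SL_p0 m else (if s = (1) then tab4_SL_p1 m else (if s = (2) then tab4_SL_p2 m else (if s = (3) then tab4_SL_p3 m else (1,0)))))))"
definition tab4_SS_m2 :: "int \<Rightarrow> int \<times> int" where "tab4_SS_m2 m = (if m = (-1) then ((-5),(-4)) else (if m = (0) then ((-5),(-4)) else (if m = (1) then ((-5),(-3)) else (if m = (2) then ((-5),(-2)) else (1,0)))))"
definition tab4_SS_m1 :: "int \<Rightarrow> int \<times> int" where "tab4_SS_m1 m = (if m = (-3) then ((-5),(-5)) else (if m = (-2) then ((-5),(-1)) else (if m = (-1) then ((-5),(1)) else (if m = (0) then ((-5),(1)) else (if m = (1) then ((-5),(2)) else (if m = (2) then ((-5),(3)) else (1,0)))))))"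
definition tab4_SS_p0 :: "int \<Rightarrow> int \<times> int" where "tab4_SS_p0 m = (if m = (-2) then ((-5),(4)) else (if m = (-1) then ((-5),(5)) else (if m = (0) then ((-5),(5)) else (if m = (1) then ((-5),(5)) else (if m = (2) then ((-4),(5)) else (1,0))))))"
definition tab4_SS_p1 :: "int \<Rightarrow> int \<times> int" where "tab4_SS_p1 m = (if m = (-2) then ((-3),(5)) else (if m = (-1) then ((-2),(5)) else (if m = (0) then ((-1),(5)) else (if m = (1) then ((-1),(5)) else (if m = (2) then ((1),(5)) else (if m = (3) then ((5),(5)) else (1,0)))))))"
definition tab4_SS_p2 :: "int \<Rightarrow> int \<times> int" where "tab4_SS_p2 m = (if m = (-2) then ((2),(5)) else (if m = (-1) then ((3),(5)) else (if m = (0) then ((4),(5)) else (if m = (1) then ((4),(5)) else (1,0)))))"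
definition tab4_SS :: "int \<Rightarrow> int \<Rightarrow> int \<times> int" where "tab4_SS s m = (if s = (-2) then tab4_SS_m2 m else (if s = (-1) then tab4_SS_m1 m else (if s = (0) then tab4_SS_p0 m else (if s = (1) then tab4_SS_p1 m else (if s = (2) then tab4_SS_p2 m else (1,0))))))"
definition tab4_SM_m1 :: "int \<Rightarrow> int \<times> int" where "tab4_SM_m1 m = (if m = (-2) then ((-5),(-5)) else (if m = (-1) then ((-5),(-3)) else (if m = (0) then ((-5),(-3)) else (if m = (1) then ((-5),(-2)) else (1,0)))))"
definition tab4_SM_p0 :: "int \<Rightarrow> int \<times> int" where "tab4_SM_p0 m = (if m = (-3) then ((-5),(-4)) else (if m = (-2) then ((-5),(0)) else (if m = (-1) then ((-5),(2)) else (if m = (0) then ((-5),(2)) else (if m = (1) then ((-5),(3)) else (1,0))))))"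
definition tab4_SM_p1 :: "int \<Rightarrow> int \<times> int" where "tab4_SM_p1 m = (if m = (-2) then ((-5),(5)) else (if m = (-1) then ((-5),(5)) else (if m = (0) then ((-5),(5)) else (if m = (1) then ((-4),(5)) else (if m = (2) then ((1),(5)) else (1,0))))))"
definition tab4_SM_p2 :: "int \<Rightarrow> int \<times> int" where "tab4_SM_p2 m = (if m = (-2) then ((-2),(5)) else (if m = (-1) then ((-1),(5)) else (if m = (0) then ((0),(5)) else (if m = (1) then ((1),(5)) else (if m = (2) then ((5),(5)) else (1,0))))))"
definition tab4_SM_p3 :: "int \<Rightarrow> int \<times> int" where "tab4_SM_p3 m = (if m = (-2) then ((3),(5)) else (if m = (-1) then ((4),(5)) else (if m = (0) then ((5),(5)) else (1,0))))"
definition tab4_SM :: "int \<Rightarrow> int \<Rightarrow> int \<times> int" where "tab4_SM s m = (if s = (-1) then tab4_SM_m1 m else (if s = (0) then tab4_SM_p0 m else (if s = (1) then tab4_SM_p1 m else (if s = (2) then tab4_SM_p2 m else (if s = (3) then tab4_SM_p3 m else (1,0))))))"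
definition tab4_ML_m3 :: "int \<Rightarrow> int \<times> int" where "tab4_ML_m3 m = (if m = (1) then ((-5),(-5)) else (if m = (2) then ((-5),(-4)) else (1,0)))"
definition tab4_ML_m2 :: "int \<Rightarrow> int \<times> int" where "tab4_ML_m2 m = (if m = (-1) then ((-5),(-2)) else (if m = (0) then ((-5),(-1)) else (if m = (1) then ((-5),(0)) else (if m = (2) then ((-5),(1)) else (1,0)))))"
definition tab4_ML_m1 :: "int \<Rightarrow> int \<times> int" where "tab4_ML_m1 m = (if m = (-2) then ((-5),(-2)) else (if m = (-1) then ((-5),(3)) else (if m = (0) then ((-5),(4)) else (if m = (1) then ((-5),(5)) else (if m = (2) then ((-5),(5)) else (1,0))))))"
definition tab4_ML_p0 :: "int \<Rightarrow> int \<times> int" where "tab4_ML_p0 m = (if m = (-1) then ((-5),(5)) else (if m = (0) then ((-5),(5)) else (if m = (1) then ((-5),(5)) else (if m = (2) then ((-4),(5)) else (if m = (3) then ((1),(5)) else (1,0))))))"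
definition tab4_ML_p1 :: "int \<Rightarrow> int \<times> int" where "tab4_ML_p1 m = (if m = (-1) then ((-2),(5)) else (if m = (0) then ((-1),(5)) else (if m = (1) then ((-1),(5)) else (if m = (2) then ((1),(5)) else (if m = (3) then ((5),(5)) else (1,0))))))"
definition tab4_ML_p2 :: "int \<Rightarrow> int \<times> int" where "tab4_ML_p2 m = (if m = (-1) then ((3),(5)) else (if m = (0) then ((4),(5)) else (if m = (1) then ((4),(5)) else (1,0))))"
definition tab4_ML :: "int \<Rightarrow> int \<Rightarrow> int \<times> int" where "tab4_ML s m = (if s = (-3) then tab4_ML_m3 m else (if s = (-2) then tab4_ML_m2 m else (if s = (-1) then tab4_ML_m1 m else (if s = (0) then tab4_ML_p0 m else (if s = (1) then tab4_ML_p1 m else (if s = (2) then tab4_ML_p2 m else (1,0)))))))"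
definition tab4_MS_m3 :: "int \<Rightarrow> int \<times> int" where "tab4_MS_m3 m = (if m = (0) then ((-5),(-5)) else (if m = (1) then ((-5),(-4)) else (if m = (2) then ((-5),(-3)) else (1,0))))"
definition tab4_MS_m2 :: "int \<Rightarrow> int \<times> int" where "tab4_MS_m2 m = (if m = (-2) then ((-5),(-5)) else (if m = (-1) then ((-5),(-1)) else (if m = (0) then ((-5),(0)) else (if m = (1) then ((-5),(1)) else (if m = (2) then ((-5),(2)) else (1,0))))))"
definition tab4_MS_m1 :: "int \<Rightarrow> int \<times> int" where "tab4_MS_m1 m = (if m = (-2) then ((-5),(-1)) else (if m = (-1) then ((-5),(4)) else (if m = (0) then ((-5),(5)) else (if m = (1) then ((-5),(5)) else (if m = (2) then ((-5),(5)) else (1,0))))))"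
definition tab4_MS_p0 :: "int \<Rightarrow> int \<times> int" where "tab4_MS_p0 m = (if m = (-1) then ((-3),(5)) else (if m = (0) then ((-2),(5)) else (if m = (1) then ((-2),(5)) else (if m = (2) then ((0),(5)) else (if m = (3) then ((4),(5)) else (1,0))))))"
definition tab4_MS_p1 :: "int \<Rightarrow> int \<times> int" where "tab4_MS_p1 m = (if m = (-1) then ((2),(5)) else (if m = (0) then ((3),(5)) else (if m = (1) then ((3),(5)) else (if m = (2) then ((5),(5)) else (1,0)))))"
definition tab4_MS :: "int \<Rightarrow> int \<Rightarrow> int \<times> int" where "tab4_MS s m = (if s = (-3) then tab4_MS_m3 m else (if s = (-2) then tab4_MS_m2 m else (if s = (-1) then tab4_MS_m1 m else (if s = (0) then tab4_MS_p0 m else (if s = (1) then tab4_MS_p1 m else (1,0))))))"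
definition tab4_MM_m2 :: "int \<Rightarrow> int \<times> int" where "tab4_MM_m2 m = (if m = (-1) then ((-5),(-5)) else (if m = (0) then ((-5),(-4)) else (if m = (1) then ((-5),(-3)) else (1,0))))"
definition tab4_MM_m1 :: "int \<Rightarrow> int \<times> int" where "tab4_MM_m1 m = (if m = (-2) then ((-5),(-4)) else (if m = (-1) then ((-5),(0)) else (if m = (0) then ((-5),(1)) else (if m = (1) then ((-5),(2)) else (1,0)))))"
definition tab4_MM_p0 :: "int \<Rightarrow> int \<times> int" where "tab4_MM_p0 m = (if m = (-2) then ((-5),(0)) else (if m = (-1) then ((-5),(5)) else (if m = (0) then ((-5),(5)) else (if m = (1) then ((-5),(5)) else (if m = (2) then ((0),(5)) else (1,0))))))"
definition tab4_MM_p1 :: "int \<Rightarrow> int \<times> int" where "tab4_MM_p1 m = (if m = (-1) then ((-2),(5)) else (if m = (0) then ((-1),(5)) else (if m = (1) then ((0),(5)) else (if m = (2) then ((4),(5)) else (1,0)))))"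
definition tab4_MM_p2 :: "int \<Rightarrow> int \<times> int" where "tab4_MM_p2 m = (if m = (-1) then ((3),(5)) else (if m = (0) then ((4),(5)) else (if m = (1) then ((5),(5)) else (1,0))))"
definition tab4_MM :: "int \<Rightarrow> int \<Rightarrow> int \<times> int" where "tab4_MM s m = (if s = (-2) then tab4_MM_m2 m else (if s = (-1) then tab4_MM_m1 m else (if s = (0) then tab4_MM_p0 m else (if s = (1) then tab4_MM_p1 m else (if s = (2) then tab4_MM_p2 m else (1,0))))))"
definition tab4_L :: "letter \<Rightarrow> int \<Rightarrow> int \<Rightarrow> int \<times> int" where "tab4_L c3 = (case c3 of L \<Rightarrow> tab4_LL | S \<Rightarrow> tab4_LS | M \<Rightarrow> tab4_LM)"
definition tab4_S :: "letter \<Rightarrow> int \<Rightarrow> int \<Rightarrow> int \<times> int" where "tab4_S c3 = (case c3 of L \<Rightarrow> tab4_SL | S \<Rightarrow> tab4_SS | M \<Rightarrow> tab4_SM)"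
definition tab4_M :: "letter \<Rightarrow> int \<Rightarrow> int \<Rightarrow> int \<times> int" where "tab4_M c3 = (case c3 of L \<Rightarrow> tab4_ML | S \<Rightarrow> tab4_MS | M \<Rightarrow> tab4_MM)"
definition tab4 :: "letter \<Rightarrow> letter \<Rightarrow> int \<Rightarrow> int \<Rightarrow> int \<times> int" where "tab4 c1 = (case c1 of L \<Rightarrow> tab4_L | S \<Rightarrow> tab4_S | M \<Rightarrow> tab4_M)"

definition tab5_LL_m3 :: "int \<Rightarrow> int \<times> int" where "tab5_LL_m3 m = (if m = (2) then ((-5),(-5)) else (1,0))"
definition tab5_LL_m2 :: "int \<Rightarrow> int \<times> int" where "tab5_LL_m2 m = (if m = (-2) then ((-5),(-3)) else (if m = (-1) then ((-5),(-2)) else (if m = (0) then ((-5),(-1)) else (if m = (1) then ((-5),(0)) else (if m = (2) then ((-5),(1)) else (1,0))))))"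
definition tab5_LL_m1 :: "int \<Rightarrow> int \<times> int" where "tab5_LL_m1 m = (if m = (-2) then ((-5),(3)) else (if m = (-1) then ((-5),(4)) else (if m = (0) then ((-5),(5)) else (if m = (1) then ((-5),(5)) else (if m = (2) then ((-5),(5)) else (1,0))))))"
definition tab5_LL_p0 :: "int \<Rightarrow> int \<times> int" where "tab5_LL_p0 m = (if m = (-2) then ((-5),(5)) else (if m = (-1) then ((-5),(5)) else (if m = (0) then ((-5),(5)) else (if m = (1) then ((-5),(5)) else (if m = (2) then ((-5),(5)) else (1,0))))))"
definition tab5_LL_p1 :: "int \<Rightarrow> int \<times> int" where "tab5_LL_p1 m = (if m = (-2) then ((-5),(5)) else (if m = (-1) then ((-5),(5)) else (if m = (0) then ((-5),(5)) else (if m = (1) then ((-4),(5)) else (if m = (2) then ((-3),(5)) else (1,0))))))"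
definition tab5_LL_p2 :: "int \<Rightarrow> int \<times> int" where "tab5_LL_p2 m = (if m = (-2) then ((-1),(5)) else (if m = (-1) then ((0),(5)) else (if m = (0) then ((1),(5)) else (if m = (1) then ((2),(5)) else (if m = (2) then ((3),(5)) else (1,0))))))"
definition tab5_LL_p3 :: "int \<Rightarrow> int \<times> int" where "tab5_LL_p3 m = (if m = (-2) then ((5),(5)) else (1,0))"
definition tab5_LL :: "int \<Rightarrow> int \<Rightarrow> int \<times> int" where "tab5_LL s m = (if s = (-3) then tab5_LL_m3 m else (if s = (-2) then tab5_LL_m2 m else (if s = (-1) then tab5_LL_m1 m else (if s = (0) then tab5_LL_p0 m else (if s = (1) then tab5_LL_p1 m else (if s = (2) then tab5_LL_p2 m else (if s = (3) then tab5_LL_p3 m else (1,0))))))))"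
definition tab5_LS_m3 :: "int \<Rightarrow> int \<times> int" where "tab5_LS_m3 m = (if m = (1) then ((-5),(-5)) else (if m = (2) then ((-5),(-4)) else (1,0)))"
definition tab5_LS_m2 :: "int \<Rightarrow> int \<times> int" where "tab5_LS_m2 m = (if m = (-2) then ((-5),(-2)) else (if m = (-1) then ((-5),(-1)) else (if m = (0) then ((-5),(0)) else (if m = (1) then ((-5),(1)) else (if m = (2) then ((-5),(2)) else (1,0))))))"
definition tab5_LS_m1 :: "int \<Rightarrow> int \<times> int" where "tab5_LS_m1 m = (if m = (-2) then ((-5),(4)) else (if m = (-1) then ((-5),(5)) else (if m = (0) then ((-5),(5)) else (if m = (1) then ((-5),(5)) else (if m = (2) then ((-5),(5)) else (1,0))))))"
definition tab5_LS_p0 :: "int \<Rightarrow> int \<times> int" where "tab5_LS_p0 m = (if m = (-2) then ((-5),(5)) else (if m = (-1) then ((-5),(5)) else (if m = (0) then ((-5),(5)) else (if m = (1) then ((-5),(5)) else (if m = (2) then ((-4),(5)) else (1,0))))))"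
definition tab5_LS_p1 :: "int \<Rightarrow> int \<times> int" where "tab5_LS_p1 m = (if m = (-2) then ((-2),(5)) else (if m = (-1) then ((-1),(5)) else (if m = (0) then ((0),(5)) else (if m = (1) then ((1),(5)) else (if m = (2) then ((2),(5)) else (1,0))))))"
definition tab5_LS_p2 :: "int \<Rightarrow> int \<times> int" where "tab5_LS_p2 m = (if m = (-2) then ((4),(5)) else (if m = (-1) then ((5),(5)) else (1,0)))"
definition tab5_LS :: "int \<Rightarrow> int \<Rightarrow> int \<times> int" where "tab5_LS s m = (if s = (-3) then tab5_LS_m3 m else (if s = (-2) then tab5_LS_m2 m else (if s = (-1) then tab5_LS_m1 m else (if s = (0) then tab5_LS_p0 m else (if s = (1) then tab5_LS_p1 m else (if s = (2) then tab5_LS_p2 m else (1,0)))))))"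
definition tab5_LM_m2 :: "int \<Rightarrow> int \<times> int" where "tab5_LM_m2 m = (if m = (0) then ((-5),(-5)) else (if m = (1) then ((-5),(-4)) else (1,0)))"
definition tab5_LM_m1 :: "int \<Rightarrow> int \<times> int" where "tab5_LM_m1 m = (if m = (-2) then ((-5),(-1)) else (if m = (-1) then ((-5),(0)) else (if m = (0) then ((-5),(1)) else (if m = (1) then ((-5),(2)) else (1,0)))))"
definition tab5_LM_p0 :: "int \<Rightarrow> int \<times> int" where "tab5_LM_p0 m = (if m = (-2) then ((-5),(5)) else (if m = (-1) then ((-5),(5)) else (if m = (0) then ((-5),(5)) else (if m = (1) then ((-5),(5)) else (1,0)))))"
definition tab5_LM_p1 :: "int \<Rightarrow> int \<times> int" where "tab5_LM_p1 m = (if m = (-2) then ((-5),(5)) else (if m = (-1) then ((-5),(5)) else (if m = (0) then ((-5),(5)) else (if m = (1) then ((-4),(5)) else (1,0)))))"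
definition tab5_LM_p2 :: "int \<Rightarrow> int \<times> int" where "tab5_LM_p2 m = (if m = (-2) then ((-1),(5)) else (if m = (-1) then ((0),(5)) else (if m = (0) then ((1),(5)) else (if m = (1) then ((2),(5)) else (1,0)))))"
definition tab5_LM_p3 :: "int \<Rightarrow> int \<times> int" where "tab5_LM_p3 m = (if m = (-2) then ((5),(5)) else (1,0))"
definition tab5_LM :: "int \<Rightarrow> int \<Rightarrow> int \<times> int" where "tab5_LM s m = (if s = (-2) then tab5_LM_m2 m else (if s = (-1) then tab5_LM_m1 m else (if s = (0) then tab5_LM_p0 m else (if s = (1) then tab5_LM_p1 m else (if s = (2) then tab5_LM_p2 m else (if s = (3) then tab5_LM_p3 m else (1,0)))))))"
definition tab5_SL_m2 :: "int \<Rightarrow> int \<times> int" where "tab5_SL_m2 m = (if m = (1) then ((-5),(-5)) else (if m = (2) then ((-5),(-4)) else (1,0)))"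
definition tab5_SL_m1 :: "int \<Rightarrow> int \<times> int" where "tab5_SL_m1 m = (if m = (-2) then ((-5),(-2)) else (if m = (-1) then ((-5),(-1)) else (if m = (0) then ((-5),(0)) else (if m = (1) then ((-5),(1)) else (if m = (2) then ((-5),(2)) else (1,0))))))"
definition tab5_SL_p0 :: "int \<Rightarrow> int \<times> int" where "tab5_SL_p0 m = (if m = (-2) then ((-5),(4)) else (if m = (-1) then ((-5),(5)) else (if m = (0) then ((-5),(5)) else (if m = (1) then ((-5),(5)) else (if m = (2) then ((-5),(5)) else (1,0))))))"
definition tab5_SL_p1 :: "int \<Rightarrow> int \<times> int" where "tab5_SL_p1 m = (if m = (-2) then ((-5),(5)) else (if m = (-1) then ((-5),(5)) else (if m = (0) then ((-5),(5)) else (if m = (1) then ((-5),(5)) else (if m = (2) then ((-4),(5)) else (1,0))))))"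
definition tab5_SL_p2 :: "int \<Rightarrow> int \<times> int" where "tab5_SL_p2 m = (if m = (-2) then ((-2),(5)) else (if m = (-1) then ((-1),(5)) else (if m = (0) then ((0),(5)) else (if m = (1) then ((1),(5)) else (if m = (2) then ((2),(5)) else (1,0))))))"
definition tab5_SL_p3 :: "int \<Rightarrow> int \<times> int" where "tab5_SL_p3 m = (if m = (-2) then ((4),(5)) else (if m = (-1) then ((5),(5)) else (1,0)))"
definition tab5_SL :: "int \<Rightarrow> int \<Rightarrow> int \<times> int" where "tab5_SL s m = (if s = (-2) then tab5_SL_m2 m else (if s = (-1) then tab5_SL_m1 m else (if s = (0) then tab5_SL_p0 m else (if s = (1) then tab5_SL_p1 m else (if s = (2) then tab5_SL_p2 m else (if s = (3) then tab5_SL_p3 m else (1,0)))))))"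
definition tab5_SS_m2 :: "int \<Rightarrow> int \<times> int" where "tab5_SS_m2 m = (if m = (0) then ((-5),(-5)) else (if m = (1) then ((-5),(-4)) else (if m = (2) then ((-5),(-3)) else (1,0))))"
definition tab5_SS_m1 :: "int \<Rightarrow> int \<times> int" where "tab5_SS_m1 m = (if m = (-2) then ((-5),(-1)) else (if m = (-1) then ((-5),(0)) else (if m = (0) then ((-5),(1)) else (if m = (1) then ((-5),(2)) else (if m = (2) then ((-5),(3)) else (1,0))))))"
definition tab5_SS_p0 :: "int \<Rightarrow> int \<times> int" where "tab5_SS_p0 m = (if m = (-2) then ((-5),(5)) else (if m = (-1) then ((-5),(5)) else (if m = (0) then ((-5),(5)) else (if m = (1) then ((-5),(5)) else (if m = (2) then ((-5),(5)) else (1,0))))))"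
definition tab5_SS_p1 :: "int \<Rightarrow> int \<times> int" where "tab5_SS_p1 m = (if m = (-2) then ((-3),(5)) else (if m = (-1) then ((-2),(5)) else (if m = (0) then ((-1),(5)) else (if m = (1) then ((0),(5)) else (if m = (2) then ((1),(5)) else (1,0))))))"
definition tab5_SS_p2 :: "int \<Rightarrow> int \<times> int" where "tab5_SS_p2 m = (if m = (-2) then ((3),(5)) else (if m = (-1) then ((4),(5)) else (if m = (0) then ((5),(5)) else (1,0))))"
definition tab5_SS :: "int \<Rightarrow> int \<Rightarrow> int \<times> int" where "tab5_SS s m = (if s = (-2) then tab5_SS_m2 m else (if s = (-1) then tab5_SS_m1 m else (if s = (0) then tab5_SS_p0 m else (if s = (1) then tab5_SS_p1 m else (if s = (2) then tab5_SS_p2 m else (1,0))))))"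
definition tab5_SM_m1 :: "int \<Rightarrow> int \<times> int" where "tab5_SM_m1 m = (if m = (-1) then ((-5),(-5)) else (if m = (0) then ((-5),(-4)) else (if m = (1) then ((-5),(-3)) else (1,0))))"
definition tab5_SM_p0 :: "int \<Rightarrow> int \<times> int" where "tab5_SM_p0 m = (if m = (-2) then ((-5),(0)) else (if m = (-1) then ((-5),(1)) else (if m = (0) then ((-5),(2)) else (if m = (1) then ((-5),(3)) else (1,0)))))"
definition tab5_SM_p1 :: "int \<Rightarrow> int \<times> int" where "tab5_SM_p1 m = (if m = (-2) then ((-5),(5)) else (if m = (-1) then ((-5),(5)) else (if m = (0) then ((-5),(5)) else (if m = (1) then ((-5),(5)) else (1,0)))))"
definition tab5_SM_p2 :: "int \<Rightarrow> int \<times> int" where "tab5_SM_p2 m = (if m = (-2) then ((-2),(5)) else (if m = (-1) then ((-1),(5)) else (if m = (0) then ((0),(5)) else (if m = (1) then ((1),(5)) else (1,0)))))"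
definition tab5_SM_p3 :: "int \<Rightarrow> int \<times> int" where "tab5_SM_p3 m = (if m = (-2) then ((4),(5)) else (if m = (-1) then ((5),(5)) else (1,0)))"
definition tab5_SM :: "int \<Rightarrow> int \<Rightarrow> int \<times> int" where "tab5_SM s m = (if s = (-1) then tab5_SM_m1 m else (if s = (0) then tab5_SM_p0 m else (if s = (1) then tab5_SM_p1 m else (if s = (2) then tab5_SM_p2 m else (if s = (3) then tab5_SM_p3 m else (1,0))))))"
definition tab5_ML_m3 :: "int \<Rightarrow> int \<times> int" where "tab5_ML_m3 m = (if m = (2) then ((-5),(-5)) else (1,0))"
definition tab5_ML_m2 :: "int \<Rightarrow> int \<times> int" where "tab5_ML_m2 m = (if m = (-1) then ((-5),(-2)) else (if m = (0) then ((-5),(-1)) else (if m = (1) then ((-5),(0)) else (if m = (2) then ((-5),(1)) else (1,0)))))"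
definition tab5_ML_m1 :: "int \<Rightarrow> int \<times> int" where "tab5_ML_m1 m = (if m = (-1) then ((-5),(4)) else (if m = (0) then ((-5),(5)) else (if m = (1) then ((-5),(5)) else (if m = (2) then ((-5),(5)) else (1,0)))))"
definition tab5_ML_p0 :: "int \<Rightarrow> int \<times> int" where "tab5_ML_p0 m = (if m = (-1) then ((-5),(5)) else (if m = (0) then ((-5),(5)) else (if m = (1) then ((-5),(5)) else (if m = (2) then ((-5),(5)) else (1,0)))))"
definition tab5_ML_p1 :: "int \<Rightarrow> int \<times> int" where "tab5_ML_p1 m = (if m = (-1) then ((-2),(5)) else (if m = (0) then ((-1),(5)) else (if m = (1) then ((0),(5)) else (if m = (2) then ((1),(5)) else (1,0)))))"
definition tab5_ML_p2 :: "int \<Rightarrow> int \<times> int" where "tab5_ML_p2 m = (if m = (-1) then ((4),(5)) else (if m = (0) then ((5),(5)) else (1,0)))"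
definition tab5_ML :: "int \<Rightarrow> int \<Rightarrow> int \<times> int" where "tab5_ML s m = (if s = (-3) then tab5_ML_m3 m else (if s = (-2) then tab5_ML_m2 m else (if s = (-1) then tab5_ML_m1 m else (if s = (0) then tab5_ML_p0 m else (if s = (1) then tab5_ML_p1 m else (if s = (2) then tab5_ML_p2 m else (1,0)))))))"
definition tab5_MS_m3 :: "int \<Rightarrow> int \<times> int" where "tab5_MS_m3 m = (if m = (1) then ((-5),(-5)) else (if m = (2) then ((-5),(-4)) else (1,0)))"
definition tab5_MS_m2 :: "int \<Rightarrow> int \<times> int" where "tab5_MS_m2 m = (if m = (-1) then ((-5),(-1)) else (if m = (0) then ((-5),(0)) else (if m = (1) then ((-5),(1)) else (if m = (2) then ((-5),(2)) else (1,0)))))"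
definition tab5_MS_m1 :: "int \<Rightarrow> int \<times> int" where "tab5_MS_m1 m = (if m = (-1) then ((-5),(5)) else (if m = (0) then ((-5),(5)) else (if m = (1) then ((-5),(5)) else (if m = (2) then ((-5),(5)) else (1,0)))))"
definition tab5_MS_p0 :: "int \<Rightarrow> int \<times> int" where "tab5_MS_p0 m = (if m = (-1) then ((-3),(5)) else (if m = (0) then ((-2),(5)) else (if m = (1) then ((-1),(5)) else (if m = (2) then ((0),(5)) else (1,0)))))"
definition tab5_MS_p1 :: "int \<Rightarrow> int \<times> int" where "tab5_MS_p1 m = (if m = (-1) then ((3),(5)) else (if m = (0) then ((4),(5)) else (if m = (1) then ((5),(5)) else (1,0))))"
definition tab5_MS :: "int \<Rightarrow> int \<Rightarrow> int \<times> int" where "tab5_MS s m = (if s = (-3) then tab5_MS_m3 m else (if s = (-2) then tab5_MS_m2 m else (if s = (-1) then tab5_MS_m1 m else (if s = (0) then tab5_MS_p0 m else (if s = (1) then tab5_MS_p1 m else (1,0))))))"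
definition tab5_MM_m2 :: "int \<Rightarrow> int \<times> int" where "tab5_MM_m2 m = (if m = (0) then ((-5),(-5)) else (if m = (1) then ((-5),(-4)) else (1,0)))"
definition tab5_MM_m1 :: "int \<Rightarrow> int \<times> int" where "tab5_MM_m1 m = (if m = (-2) then ((-5),(-5)) else (if m = (-1) then ((-5),(0)) else (if m = (0) then ((-5),(1)) else (if m = (1) then ((-5),(2)) else (1,0)))))"
definition tab5_MM_p0 :: "int \<Rightarrow> int \<times> int" where "tab5_MM_p0 m = (if m = (-1) then ((-5),(5)) else (if m = (0) then ((-5),(5)) else (if m = (1) then ((-5),(5)) else (1,0))))"
definition tab5_MM_p1 :: "int \<Rightarrow> int \<times> int" where "tab5_MM_p1 m = (if m = (-1) then ((-2),(5)) else (if m = (0) then ((-1),(5)) else (if m = (1) then ((0),(5)) else (if m = (2) then ((5),(5)) else (1,0)))))"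
definition tab5_MM_p2 :: "int \<Rightarrow> int \<times> int" where "tab5_MM_p2 m = (if m = (-1) then ((4),(5)) else (if m = (0) then ((5),(5)) else (1,0)))"
definition tab5_MM :: "int \<Rightarrow> int \<Rightarrow> int \<times> int" where "tab5_MM s m = (if s = (-2) then tab5_MM_m2 m else (if s = (-1) then tab5_MM_m1 m else (if s = (0) then tab5_MM_p0 m else (if s = (1) then tab5_MM_p1 m else (if s = (2) then tab5_MM_p2 m else (1,0))))))"
definition tab5_L :: "letter \<Rightarrow> int \<Rightarrow> int \<Rightarrow> int \<times> int" where "tab5_L c3 = (case c3 of L \<Rightarrow> tab5_LL | S \<Rightarrow> tab5_LS | M \<Rightarrow> tab5_LM)"
definition tab5_S :: "letter \<Rightarrow> int \<Rightarrow> int \<Rightarrow> int \<times> int" where "tab5_S c3 = (case c3 of L \<Rightarrow> tab5_SL | S \<Rightarrow> tab5_SS | M \<Rightarrow> tab5_SM)"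
definition tab5_M :: "letter \<Rightarrow> int \<Rightarrow> int \<Rightarrow> int \<times> int" where "tab5_M c3 = (case c3 of L \<Rightarrow> tab5_ML | S \<Rightarrow> tab5_MS | M \<Rightarrow> tab5_MM)"
definition tab5 :: "letter \<Rightarrow> letter \<Rightarrow> int \<Rightarrow> int \<Rightarrow> int \<times> int" where "tab5 c1 = (case c1 of L \<Rightarrow> tab5_L | S \<Rightarrow> tab5_S | M \<Rightarrow> tab5_M)"

definition tab6_LL_m2 :: "int \<Rightarrow> int \<times> int" where "tab6_LL_m2 m = (if m = (-2) then ((-5),(-3)) else (if m = (-1) then ((-5),(-2)) else (if m = (0) then ((-5),(-1)) else (if m = (1) then ((-5),(0)) else (if m = (2) then ((-5),(1)) else (1,0))))))"
definition tab6_LL_m1 :: "int \<Rightarrow> int \<times> int" where "tab6_LL_m1 m = (if m = (-2) then ((-5),(4)) else (if m = (-1) then ((-5),(5)) else (if m = (0) then ((-5),(5)) else (if m = (1) then ((-5),(5)) else (if m = (2) then ((-5),(5)) else (1,0))))))"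
definition tab6_LL_p0 :: "int \<Rightarrow> int \<times> int" where "tab6_LL_p0 m = (if m = (-2) then ((-5),(5)) else (if m = (-1) then ((-5),(5)) else (if m = (0) then ((-5),(5)) else (if m = (1) then ((-5),(5)) else (if m = (2) then ((-5),(5)) else (1,0))))))"
definition tab6_LL_p1 :: "int \<Rightarrow> int \<times> int" where "tab6_LL_p1 m = (if m = (-2) then ((-5),(5)) else (if m = (-1) then ((-5),(5)) else (if m = (0) then ((-5),(5)) else (if m = (1) then ((-5),(5)) else (if m = (2) then ((-4),(5)) else (1,0))))))"
definition tab6_LL_p2 :: "int \<Rightarrow> int \<times> int" where "tab6_LL_p2 m = (if m = (-2) then ((-1),(5)) else (if m = (-1) then ((0),(5)) else (if m = (0) then ((1),(5)) else (if m = (1) then ((2),(5)) else (if m = (2) then ((3),(5)) else (1,0))))))"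
definition tab6_LL :: "int \<Rightarrow> int \<Rightarrow> int \<times> int" where "tab6_LL s m = (if s = (-2) then tab6_LL_m2 m else (if s = (-1) then tab6_LL_m1 m else (if s = (0) then tab6_LL_p0 m else (if s = (1) then tab6_LL_p1 m else (if s = (2) then tab6_LL_p2 m else (1,0))))))"
definition tab6_LS_m3 :: "int \<Rightarrow> int \<times> int" where "tab6_LS_m3 m = (if m = (2) then ((-5),(-5)) else (1,0))"
definition tab6_LS_m2 :: "int \<Rightarrow> int \<times> int" where "tab6_LS_m2 m = (if m = (-2) then ((-5),(-2)) else (if m = (-1) then ((-5),(-1)) else (if m = (0) then ((-5),(0)) else (if m = (1) then ((-5),(1)) else (if m = (2) then ((-5),(2)) else (1,0))))))"
definition tab6_LS_m1 :: "int \<Rightarrow> int \<times> int" where "tab6_LS_m1 m = (if m = (-2) then ((-5),(5)) else (if m = (-1) then ((-5),(5)) else (if m = (0) then ((-5),(5)) else (if m = (1) then ((-5),(5)) else (if m = (2) then ((-5),(5)) else (1,0))))))"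
definition tab6_LS_p0 :: "int \<Rightarrow> int \<times> int" where "tab6_LS_p0 m = (if m = (-2) then ((-5),(5)) else (if m = (-1) then ((-5),(5)) else (if m = (0) then ((-5),(5)) else (if m = (1) then ((-5),(5)) else (if m = (2) then ((-5),(5)) else (1,0))))))"
definition tab6_LS_p1 :: "int \<Rightarrow> int \<times> int" where "tab6_LS_p1 m = (if m = (-2) then ((-2),(5)) else (if m = (-1) then ((-1),(5)) else (if m = (0) then ((0),(5)) else (if m = (1) then ((1),(5)) else (if m = (2) then ((2),(5)) else (1,0))))))"
definition tab6_LS_p2 :: "int \<Rightarrow> int \<times> int" where "tab6_LS_p2 m = (if m = (-2) then ((5),(5)) else (1,0))"
definition tab6_LS :: "int \<Rightarrow> int \<Rightarrow> int \<times> int" where "tab6_LS s m = (if s = (-3) then tab6_LS_m3 m else (if s = (-2) then tab6_LS_m2 m else (if s = (-1) then tab6_LS_m1 m else (if s = (0) then tab6_LS_p0 m else (if s = (1) then tab6_LS_p1 m else (if s = (2) then tab6_LS_p2 m else (1,0)))))))"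
definition tab6_LM_m2 :: "int \<Rightarrow> int \<times> int" where "tab6_LM_m2 m = (if m = (1) then ((-5),(-5)) else (1,0))"
definition tab6_LM_m1 :: "int \<Rightarrow> int \<times> int" where "tab6_LM_m1 m = (if m = (-2) then ((-5),(-1)) else (if m = (-1) then ((-5),(0)) else (if m = (0) then ((-5),(1)) else (if m = (1) then ((-5),(2)) else (1,0)))))"
definition tab6_LM_p0 :: "int \<Rightarrow> int \<times> int" where "tab6_LM_p0 m = (if m = (-2) then ((-5),(5)) else (if m = (-1) then ((-5),(5)) else (if m = (0) then ((-5),(5)) else (if m = (1) then ((-5),(5)) else (1,0)))))"
definition tab6_LM_p1 :: "int \<Rightarrow> int \<times> int" where "tab6_LM_p1 m = (if m = (-2) then ((-5),(5)) else (if m = (-1) then ((-5),(5)) else (if m = (0) then ((-5),(5)) else (if m = (1) then ((-5),(5)) else (1,0)))))"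
definition tab6_LM_p2 :: "int \<Rightarrow> int \<times> int" where "tab6_LM_p2 m = (if m = (-2) then ((-1),(5)) else (if m = (-1) then ((0),(5)) else (if m = (0) then ((1),(5)) else (if m = (1) then ((2),(5)) else (1,0)))))"
definition tab6_LM :: "int \<Rightarrow> int \<Rightarrow> int \<times> int" where "tab6_LM s m = (if s = (-2) then tab6_LM_m2 m else (if s = (-1) then tab6_LM_m1 m else (if s = (0) then tab6_LM_p0 m else (if s = (1) then tab6_LM_p1 m else (if s = (2) then tab6_LM_p2 m else (1,0))))))"
definition tab6_SL_m2 :: "int \<Rightarrow> int \<times> int" where "tab6_SL_m2 m = (if m = (2) then ((-5),(-5)) else (1,0))"
definition tab6_SL_m1 :: "int \<Rightarrow> int \<times> int" where "tab6_SL_m1 m = (if m = (-2) then ((-5),(-2)) else (if m = (-1) then ((-5),(-1)) else (if m = (0) then ((-5),(0)) else (if m = (1) then ((-5),(1)) else (if m = (2) then ((-5),(2)) else (1,0))))))"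
definition tab6_SL_p0 :: "int \<Rightarrow> int \<times> int" where "tab6_SL_p0 m = (if m = (-2) then ((-5),(5)) else (if m = (-1) then ((-5),(5)) else (if m = (0) then ((-5),(5)) else (if m = (1) then ((-5),(5)) else (if m = (2) then ((-5),(5)) else (1,0))))))"
definition tab6_SL_p1 :: "int \<Rightarrow> int \<times> int" where "tab6_SL_p1 m = (if m = (-2) then ((-5),(5)) else (if m = (-1) then ((-5),(5)) else (if m = (0) then ((-5),(5)) else (if m = (1) then ((-5),(5)) else (if m = (2) then ((-5),(5)) else (1,0))))))"
definition tab6_SL_p2 :: "int \<Rightarrow> int \<times> int" where "tab6_SL_p2 m = (if m = (-2) then ((-2),(5)) else (if m = (-1) then ((-1),(5)) else (if m = (0) then ((0),(5)) else (if m = (1) then ((1),(5)) else (if m = (2) then ((2),(5)) else (1,0))))))"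
definition tab6_SL_p3 :: "int \<Rightarrow> int \<times> int" where "tab6_SL_p3 m = (if m = (-2) then ((5),(5)) else (1,0))"
definition tab6_SL :: "int \<Rightarrow> int \<Rightarrow> int \<times> int" where "tab6_SL s m = (if s = (-2) then tab6_SL_m2 m else (if s = (-1) then tab6_SL_m1 m else (if s = (0) then tab6_SL_p0 m else (if s = (1) then tab6_SL_p1 m else (if s = (2) then tab6_SL_p2 m else (if s = (3) then tab6_SL_p3 m else (1,0)))))))"
definition tab6_SS_m2 :: "int \<Rightarrow> int \<times> int" where "tab6_SS_m2 m = (if m = (1) then ((-5),(-5)) else (if m = (2) then ((-5),(-4)) else (1,0)))"
definition tab6_SS_m1 :: "int \<Rightarrow> int \<times> int" where "tab6_SS_m1 m = (if m = (-2) then ((-5),(-1)) else (if m = (-1) then ((-5),(0)) else (if m = (0) then ((-5),(1)) else (if m = (1) then ((-5),(2)) else (if m = (2) then ((-5),(3)) else (1,0))))))"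
definition tab6_SS_p0 :: "int \<Rightarrow> int \<times> int" where "tab6_SS_p0 m = (if m = (-2) then ((-5),(5)) else (if m = (-1) then ((-5),(5)) else (if m = (0) then ((-5),(5)) else (if m = (1) then ((-5),(5)) else (if m = (2) then ((-5),(5)) else (1,0))))))"
definition tab6_SS_p1 :: "int \<Rightarrow> int \<times> int" where "tab6_SS_p1 m = (if m = (-2) then ((-3),(5)) else (if m = (-1) then ((-2),(5)) else (if m = (0) then ((-1),(5)) else (if m = (1) then ((0),(5)) else (if m = (2) then ((1),(5)) else (1,0))))))"
definition tab6_SS_p2 :: "int \<Rightarrow> int \<times> int" where "tab6_SS_p2 m = (if m = (-2) then ((4),(5)) else (if m = (-1) then ((5),(5)) else (1,0)))"
definition tab6_SS :: "int \<Rightarrow> int \<Rightarrow> int \<times> int" where "tab6_SS s m = (if s = (-2) then tab6_SS_m2 m else (if s = (-1) then tab6_SS_m1 m else (if s = (0) then tab6_SS_p0 m else (if s = (1) then tab6_SS_p1 m else (if s = (2) then tab6_SS_p2 m else (1,0))))))"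
definition tab6_SM_m1 :: "int \<Rightarrow> int \<times> int" where "tab6_SM_m1 m = (if m = (0) then ((-5),(-5)) else (if m = (1) then ((-5),(-4)) else (1,0)))"
definition tab6_SM_p0 :: "int \<Rightarrow> int \<times> int" where "tab6_SM_p0 m = (if m = (-2) then ((-5),(0)) else (if m = (-1) then ((-5),(1)) else (if m = (0) then ((-5),(2)) else (if m = (1) then ((-5),(3)) else (1,0)))))"
definition tab6_SM_p1 :: "int \<Rightarrow> int \<times> int" where "tab6_SM_p1 m = (if m = (-2) then ((-5),(5)) else (if m = (-1) then ((-5),(5)) else (if m = (0) then ((-5),(5)) else (if m = (1) then ((-5),(5)) else (1,0)))))"
definition tab6_SM_p2 :: "int \<Rightarrow> int \<times> int" where "tab6_SM_p2 m = (if m = (-2) then ((-2),(5)) else (if m = (-1) then ((-1),(5)) else (if m = (0) then ((0),(5)) else (if m = (1) then ((1),(5)) else (1,0)))))"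
definition tab6_SM_p3 :: "int \<Rightarrow> int \<times> int" where "tab6_SM_p3 m = (if m = (-2) then ((5),(5)) else (1,0))"
definition tab6_SM :: "int \<Rightarrow> int \<Rightarrow> int \<times> int" where "tab6_SM s m = (if s = (-1) then tab6_SM_m1 m else (if s = (0) then tab6_SM_p0 m else (if s = (1) then tab6_SM_p1 m else (if s = (2) then tab6_SM_p2 m else (if s = (3) then tab6_SM_p3 m else (1,0))))))"
definition tab6_ML_m2 :: "int \<Rightarrow> int \<times> int" where "tab6_ML_m2 m = (if m = (-1) then ((-5),(-2)) else (if m = (0) then ((-5),(-1)) else (if m = (1) then ((-5),(0)) else (if m = (2) then ((-5),(1)) else (1,0)))))"
definition tab6_ML_m1 :: "int \<Rightarrow> int \<times> int" where "tab6_ML_m1 m = (if m = (-1) then ((-5),(5)) else (if m = (0) then ((-5),(5)) else (if m = (1) then ((-5),(5)) else (if m = (2) then ((-5),(5)) else (1,0)))))"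
definition tab6_ML_p0 :: "int \<Rightarrow> int \<times> int" where "tab6_ML_p0 m = (if m = (-1) then ((-5),(5)) else (if m = (0) then ((-5),(5)) else (if m = (1) then ((-5),(5)) else (if m = (2) then ((-5),(5)) else (1,0)))))"
definition tab6_ML_p1 :: "int \<Rightarrow> int \<times> int" where "tab6_ML_p1 m = (if m = (-1) then ((-2),(5)) else (if m = (0) then ((-1),(5)) else (if m = (1) then ((0),(5)) else (if m = (2) then ((1),(5)) else (1,0)))))"
definition tab6_ML_p2 :: "int \<Rightarrow> int \<times> int" where "tab6_ML_p2 m = (if m = (-1) then ((5),(5)) else (1,0))"
definition tab6_ML :: "int \<Rightarrow> int \<Rightarrow> int \<times> int" where "tab6_ML s m = (if s = (-2) then tab6_ML_m2 m else (if s = (-1) then tab6_ML_m1 m else (if s = (0) then tab6_ML_p0 m else (if s = (1) then tab6_ML_p1 m else (if s = (2) then tab6_ML_p2 m else (1,0))))))"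
definition tab6_MS_m3 :: "int \<Rightarrow> int \<times> int" where "tab6_MS_m3 m = (if m = (2) then ((-5),(-5)) else (1,0))"
definition tab6_MS_m2 :: "int \<Rightarrow> int \<times> int" where "tab6_MS_m2 m = (if m = (-1) then ((-5),(-1)) else (if m = (0) then ((-5),(0)) else (if m = (1) then ((-5),(1)) else (if m = (2) then ((-5),(2)) else (1,0)))))"
definition tab6_MS_m1 :: "int \<Rightarrow> int \<times> int" where "tab6_MS_m1 m = (if m = (-1) then ((-5),(5)) else (if m = (0) then ((-5),(5)) else (if m = (1) then ((-5),(5)) else (if m = (2) then ((-5),(5)) else (1,0)))))"
definition tab6_MS_p0 :: "int \<Rightarrow> int \<times> int" where "tab6_MS_p0 m = (if m = (-1) then ((-3),(5)) else (if m = (0) then ((-2),(5)) else (if m = (1) then ((-1),(5)) else (if m = (2) then ((0),(5)) else (1,0)))))"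
definition tab6_MS_p1 :: "int \<Rightarrow> int \<times> int" where "tab6_MS_p1 m = (if m = (-1) then ((4),(5)) else (if m = (0) then ((5),(5)) else (1,0)))"
definition tab6_MS :: "int \<Rightarrow> int \<Rightarrow> int \<times> int" where "tab6_MS s m = (if s = (-3) then tab6_MS_m3 m else (if s = (-2) then tab6_MS_m2 m else (if s = (-1) then tab6_MS_m1 m else (if s = (0) then tab6_MS_p0 m else (if s = (1) then tab6_MS_p1 m else (1,0))))))"
definition tab6_MM_m2 :: "int \<Rightarrow> int \<times> int" where "tab6_MM_m2 m = (if m = (1) then ((-5),(-5)) else (1,0))"
definition tab6_MM_m1 :: "int \<Rightarrow> int \<times> int" where "tab6_MM_m1 m = (if m = (-1) then ((-5),(0)) else (if m = (0) then ((-5),(1)) else (if m = (1) then ((-5),(2)) else (1,0))))"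
definition tab6_MM_p0 :: "int \<Rightarrow> int \<times> int" where "tab6_MM_p0 m = (if m = (-1) then ((-5),(5)) else (if m = (0) then ((-5),(5)) else (if m = (1) then ((-5),(5)) else (1,0))))"
definition tab6_MM_p1 :: "int \<Rightarrow> int \<times> int" where "tab6_MM_p1 m = (if m = (-1) then ((-2),(5)) else (if m = (0) then ((-1),(5)) else (if m = (1) then ((0),(5)) else (1,0))))"
definition tab6_MM_p2 :: "int \<Rightarrow> int \<times> int" where "tab6_MM_p2 m = (if m = (-1) then ((5),(5)) else (1,0))"
definition tab6_MM :: "int \<Rightarrow> int \<Rightarrow> int \<times> int" where "tab6_MM s m = (if s = (-2) then tab6_MM_m2 m else (if s = (-1) then tab6_MM_m1 m else (if s = (0) then tab6_MM_p0 m else (if s = (1) then tab6_MM_p1 m else (if s = (2) then tab6_MM_p2 m else (1,0))))))"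
definition tab6_L :: "letter \<Rightarrow> int \<Rightarrow> int \<Rightarrow> int \<times> int" where "tab6_L c3 = (case c3 of L \<Rightarrow> tab6_LL | S \<Rightarrow> tab6_LS | M \<Rightarrow> tab6_LM)"
definition tab6_S :: "letter \<Rightarrow> int \<Rightarrow> int \<Rightarrow> int \<times> int" where "tab6_S c3 = (case c3 of L \<Rightarrow> tab6_SL | S \<Rightarrow> tab6_SS | M \<Rightarrow> tab6_SM)"
definition tab6_M :: "letter \<Rightarrow> int \<Rightarrow> int \<Rightarrow> int \<times> int" where "tab6_M c3 = (case c3 of L \<Rightarrow> tab6_ML | S \<Rightarrow> tab6_MS | M \<Rightarrow> tab6_MM)"
definition tab6 :: "letter \<Rightarrow> letter \<Rightarrow> int \<Rightarrow> int \<Rightarrow> int \<times> int" where "tab6 c1 = (case c1 of L \<Rightarrow> tab6_L | S \<Rightarrow> tab6_S | M \<Rightarrow> tab6_M)"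

lemma chk2: "allchk 2 7 tab2" by code_simp
lemma chk3: "allchk 3 6 tab3" by code_simp
lemma chk4: "allchk 4 5 tab4" by code_simp
lemma chk5: "allchk 5 5 tab5" by code_simp
lemma chk6: "allchk 6 5 tab6" by code_simp


definition IInv :: "state \<Rightarrow> bool" where
  "IInv t = (case t of (d, s, m, c1, c3) \<Rightarrow> \<bar>s\<bar> \<le> 2 \<and> \<bar>m\<bar> \<le> 2 \<and> (s = 2 \<longrightarrow> d \<ge> -2) \<and> (s = -2 \<longrightarrow> d \<le> 2))"

lemma ell_le: "p \<ge> 1 \<Longrightarrow> ell p c \<le> int p + 1"
  using len_le[of p c] by (simp add: ell_def)

lemma TR_E:
  assumes "p \<ge> 1" "TR p (d', s', m', c1, c3) (d, s, m, a1, a3)"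
  shows "\<exists>\<rho>. d = int p * (d' - s') + d' - m' + \<rho> \<and> -2 * int p \<le> \<rho> \<and> \<rho> \<le> 2 * int p \<and> s = d' - s' \<and> m = s'"
proof -
  from assms(2) obtain r1 r2 r3 r4 where R: "r1 < length (phi p c1)" "r3 < length (phi p c3)" "r2 \<le> p" "r4 \<le> p"
      "d = (int p + 1) * d' - int p * s' - m' + int r2 - int r1 - int r4 + int r3"
      "s = d' - s'" "m = s'" by auto
  have "r1 \<le> p" "r3 \<le> p" using R(1,2) len_le[OF assms(1), of c1] len_le[OF assms(1), of c3] by auto
  then show ?thesis using R
    by (intro exI[of _ "int r2 - int r1 - int r4 + int r3"]) (auto simp: algebra_simps)
qed

lemma I_sound:
  assumes p7: "p \<ge> 7"
  shows "inv_sys_fin p 5 IInv"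
proof (unfold_locales)
  show "1 \<le> p" using p7 by simp
  show "0 \<le> (5::int)" by simp
next
  fix t' t assume I: "IInv t'" and T: "TR p t' t" and dE: "\<bar>fst t\<bar> \<le> 5" and "\<bar>fst t'\<bar> \<le> 5"
  obtain d' s' m' c1 c3 where t': "t' = (d', s', m', c1, c3)" by (cases t') auto
  obtain d s m a1 a3 where t: "t = (d, s, m, a1, a3)" by (cases t) auto
  obtain \<rho> where R: "d = int p * (d' - s') + d' - m' + \<rho>" "-2 * int p \<le> \<rho>" "\<rho> \<le> 2 * int p" "s = d' - s'" "m = s'"
    using TR_E[of p d' s' m' c1 c3 d s m a1 a3] T p7 unfolding t t' by auto
  have Ii: "\<bar>s'\<bar> \<le> 2" "\<bar>m'\<bar> \<le> 2" "s' = 2 \<longrightarrow> d' \<ge> -2" "s' = -2 \<longrightarrow> d' \<le> 2" using I unfolding t' IInv_def by auto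
  have dd: "\<bar>d\<bar> \<le> 5" using dE t by simp
  have p7': "int p \<ge> 7" using p7 by simp
  have X1: "d' - s' \<le> 2"
  proof (rule ccontr)
    assume a: "\<not> d' - s' \<le> 2"
    then have "int p * (d' - s') \<ge> int p * 3" by (intro mult_left_mono) auto
    then show False using R Ii dd p7' a by linarith
  qed
  have X2: "d' - s' \<ge> -2"
  proof (rule ccontr)
    assume a: "\<not> d' - s' \<ge> -2"
    then have "int p * (d' - s') \<le> int p * (-3)" by (intro mult_left_mono) auto
    then show False using R Ii dd p7' a by linarith
  qed
  have X3: "d' - s' = 2 \<longrightarrow> d \<ge> -2"
  proof
    assume "d' - s' = 2"
    then have "int p * (d' - s') = 2 * int p" by simp
    then show "d \<ge> -2" using R Ii \<open>d' - s' = 2\<close> by linarith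
  qed
  have X4: "d' - s' = -2 \<longrightarrow> d \<le> 2"
  proof
    assume "d' - s' = -2"
    then have "int p * (d' - s') = -2 * int p" by simp
    then show "d \<le> 2" using R Ii \<open>d' - s' = -2\<close> by linarith
  qed
  show "IInv t" unfolding t IInv_def using R(4,5) X1 X2 X3 X4 Ii by auto
next
  fix s m c1 c3 assume "IInv (5, s, m, c1, c3)"
  then have "s \<le> 2" "m \<le> 2" unfolding IInv_def by auto
  then have "int p * s \<le> int p * 2" by (intro mult_left_mono) auto
  then show "(int p + 1) * 5 - int p * s - m + 1 - (ell p c1 - 1) - int p > 5"
    using ell_le[of p c1] p7 \<open>m \<le> 2\<close> by (simp only: distrib_right) linarith
next
  fix s m c1 c3 assume "IInv (-5, s, m, c1, c3)"
  then have "s \<ge> -2" "m \<ge> -2" unfolding IInv_def by auto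
  then have "int p * s \<ge> int p * (-2)" by (intro mult_left_mono) auto
  then show "-(int p + 1) * 5 - int p * s - m - 1 + (ell p c3 - 1) + int p < -5"
  proof -
    have a: "-(int p + 1) * 5 = -5 * int p - 5" by simp
    have b: "int p * (-2) = -2 * int p" by simp
    have c: "ell p c3 \<le> int p + 1" using ell_le[of p c3] p7 by simp
    show ?thesis using a b c \<open>int p * s \<ge> int p * (-2)\<close> \<open>m \<ge> -2\<close> p7 by linarith
  qed
next
  show "IInv (0, 0, 0, L, L)" by (simp add: IInv_def)
next
  fix t1 d0 s0 m0 a1 a3 assume I1: "IInv t1" and T: "TR p t1 (d0, s0, m0, a1, a3)" and I0: "IInv (d0, s0, m0, a1, a3)"
    and d0: "d0 = 0"
  obtain d1 s1 m1 c1 c3 where t1: "t1 = (d1, s1, m1, c1, c3)" by (cases t1) auto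
  obtain \<rho> where R: "d0 = int p * (d1 - s1) + d1 - m1 + \<rho>" "-2 * int p \<le> \<rho>" "\<rho> \<le> 2 * int p" "s0 = d1 - s1" "m0 = s1"
    using TR_E[of p d1 s1 m1 c1 c3 d0 s0 m0 a1 a3] T p7 unfolding t1 by auto
  have Ii: "\<bar>s1\<bar> \<le> 2" "\<bar>m1\<bar> \<le> 2" using I1 unfolding t1 IInv_def by auto
  have I0': "\<bar>s0\<bar> \<le> 2" "\<bar>m0\<bar> \<le> 2" using I0 unfolding IInv_def by auto
  have "d1 \<noteq> 4"
  proof
    assume "d1 = 4"
    then have "s0 = 2" "s1 = 2" using R I0' Ii by auto
    then have "int p * (d1 - s1) = 2 * int p" using \<open>d1 = 4\<close> by simp
    then show False using R d0 Ii \<open>d1 = 4\<close> by linarith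
  qed
  moreover have "d1 \<noteq> -4"
  proof
    assume "d1 = -4"
    then have "s0 = -2" "s1 = -2" using R I0' Ii by auto
    then have "int p * (d1 - s1) = -2 * int p" using \<open>d1 = -4\<close> by simp
    then show False using R d0 Ii \<open>d1 = -4\<close> by linarith
  qed
  ultimately show "\<bar>s0\<bar> \<le> 3 \<and> \<bar>m0\<bar> \<le> 3 \<and> \<bar>s0 + m0\<bar> \<le> 3"
    using R I0' Ii by auto
qed


definition isfac :: "nat \<Rightarrow> letter list \<Rightarrow> bool" where
  "isfac p w = (\<exists>i. map (u p) [i..<i + length w] = w)"

lemma isfac_sub: assumes "isfac p (xs @ ys @ zs)" shows "isfac p ys"
proof -
  obtain i where i: "map (u p) [i..<i + length (xs @ ys @ zs)] = xs @ ys @ zs" using assms by (auto simp: isfac_def)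
  have "map (u p) [i + length xs..<i + length xs + length ys] = ys"
  proof (rule nth_equalityI)
    show "length (map (u p) [i + length xs..<i + length xs + length ys]) = length ys" by simp
  next
    fix j assume j: "j < length (map (u p) [i + length xs..<i + length xs + length ys])"
    then have j': "j < length ys" by simp
    have "map (u p) [i..<i + length (xs @ ys @ zs)] ! (length xs + j) = (xs @ ys @ zs) ! (length xs + j)"
      using i by simp
    then show "map (u p) [i + length xs..<i + length xs + length ys] ! j = ys ! j"
      using j' by (simp add: nth_append add.assoc)
  qed
  then show ?thesis unfolding isfac_def by blast
qed

lemma map_u_block:
  assumes "p \<ge> 1"
  shows "map (u p) [Lam p k..<Lam p k + length (phi p (u p k))] = phi p (u p k)"
proof (rule nth_equalityI)
  fix j assume "j < length (map (u p) [Lam p k..<Lam p k + length (phi p (u p k))])"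
  then have j: "j < length (phi p (u p k))" by simp
  then show "map (u p) [Lam p k..<Lam p k + length (phi p (u p k))] ! j = phi p (u p k) ! j"
    using u_phi[OF assms j] by simp
qed simp

lemma map_u_Lam:
  assumes "p \<ge> 1"
  shows "map (u p) [Lam p k..<Lam p (k + n)] = phi_word p (map (u p) [k..<k + n])"
proof (induction n)
  case 0 then show ?case by (simp add: phi_word_def)
next
  case (Suc n)
  have e1: "Lam p (k + Suc n) = Lam p (k + n) + length (phi p (u p (k + n)))" by (simp add: Lam_Suc)
  have e2: "[Lam p k..<Lam p (k + n) + length (phi p (u p (k + n)))] =
      [Lam p k..<Lam p (k + n)] @ [Lam p (k + n)..<Lam p (k + n) + length (phi p (u p (k + n)))]"
    by (rule upt_add_eq_append) (rule Lam_mono, simp)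
  have e3: "[k..<k + Suc n] = [k..<k + n] @ [k + n]" by simp
  show ?case unfolding e1 e2 e3 map_append using Suc map_u_block[OF assms, of "k + n"]
    by (simp add: phi_word_def)
qed

lemma isfac_phi: assumes "p \<ge> 1" "isfac p w" shows "isfac p (phi_word p w)"
proof -
  obtain i where i: "map (u p) [i..<i + length w] = w" using assms(2) by (auto simp: isfac_def)
  have e: "map (u p) [Lam p i..<Lam p (i + length w)] = phi_word p w" using map_u_Lam[OF assms(1), of i "length w"] i by simp
  have "length (phi_word p w) = Lam p (i + length w) - Lam p i" using arg_cong[OF e, of length] by simp
  moreover have "Lam p i \<le> Lam p (i + length w)" by (rule Lam_mono) simp
  ultimately have "Lam p (i + length w) = Lam p i + length (phi_word p w)" by simp
  then show ?thesis unfolding isfac_def using e by (intro exI[of _ "Lam p i"]) simp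
qed

lemma isfac_L: "p \<ge> 1 \<Longrightarrow> isfac p [L]"
  unfolding isfac_def using u_0[of p] by (intro exI[of _ 0]) simp

lemma phi_word_simps[simp]:
  "phi_word p [] = []" "phi_word p (a # w) = phi p a @ phi_word p w"
  "phi_word p (xs @ ys) = phi_word p xs @ phi_word p ys"
  by (simp_all add: phi_word_def)

lemma phi_word_repL: "phi_word p (replicate n L) = concat (replicate n (replicate p L @ [S]))"
  by (induction n) auto

lemma count_concat_rep: "count_list (concat (replicate n xs)) a = n * count_list xs a"
  by (induction n) auto

definition w1 :: "nat \<Rightarrow> letter list" where
  "w1 p = replicate (p - 1) L @ [S] @ concat (replicate (p - 1) (replicate p L @ [S])) @ replicate 3 L"
definition w2 :: "nat \<Rightarrow> letter list" where
  "w2 p = [S, M] @ replicate (p - 1) L @ [S] @ concat (replicate (p - 1) (replicate p L @ [S])) @ [M]"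

lemma rep_split: "n \<ge> 1 \<Longrightarrow> replicate n x = replicate (n - 1) x @ [x]"
  by (metis One_nat_def Suc_pred less_eq_Suc_le replicate_Suc replicate_append_same)

lemma isfac_phi': "p \<ge> 1 \<Longrightarrow> isfac p w \<Longrightarrow> phi_word p w = w' \<Longrightarrow> isfac p w'"
  using isfac_phi by blast

lemma isfac_w2: assumes p: "p \<ge> 2" shows "isfac p (w2 p)"
proof -
  have p1: "p \<ge> 1" using p by simp
  obtain q where q: "p = Suc q" using p1 by (cases p) auto
  have f1: "isfac p (replicate p L @ [S])" using isfac_phi'[OF p1 isfac_L[OF p1]] by simp
  have "isfac p [L, S]" using f1 isfac_sub[of p "replicate q L" "[L, S]" "[]"] q by (simp add: replicate_append_same[symmetric])
  then have "isfac p (replicate p L @ [S] @ [M])" using isfac_phi'[OF p1] by simp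
  then have "isfac p [L, S, M]" using isfac_sub[of p "replicate q L" "[L, S, M]" "[]"] q by (simp add: replicate_append_same[symmetric])
  then have "isfac p (replicate p L @ [S] @ [M] @ replicate (p - 1) L @ [S])" using isfac_phi'[OF p1] by simp
  then have "isfac p ([L, S, M] @ replicate (p - 1) L @ [S])"
    using isfac_sub[of p "replicate q L" "[L, S, M] @ replicate (p - 1) L @ [S]" "[]"] q by (simp add: replicate_append_same[symmetric])
  moreover have "phi_word p ([L, S, M] @ replicate (p - 1) L @ [S]) = replicate p L @ w2 p"
  proof -
    have "phi_word p ([L, S, M] @ replicate (p - 1) L @ [S]) =
       (replicate p L @ [S]) @ [M] @ (replicate (p - 1) L @ [S]) @ concat (replicate (p - 1) (replicate p L @ [S])) @ [M]"
      by (simp only: phi_word_simps phi_word_repL phi.simps append_Nil2 append_assoc append_Cons append_Nil)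
    then show ?thesis unfolding w2_def append_assoc append_Cons append_Nil .
  qed
  ultimately have "isfac p (replicate p L @ w2 p)" using isfac_phi'[OF p1] by metis
  then show ?thesis using isfac_sub[of p "replicate p L" "w2 p" "[]"] by simp
qed

lemma isfac_w1: assumes p: "p \<ge> 3" shows "isfac p (w1 p)"
proof -
  have p1: "p \<ge> 1" using p by simp
  define q where "q = p - 3"
  have q: "p = Suc (Suc (Suc q))" using p unfolding q_def by simp
  have f1: "isfac p (replicate p L @ [S])" using isfac_phi'[OF p1 isfac_L[OF p1]] by simp
  have "isfac p [L, L]" using f1 isfac_sub[of p "[]" "[L, L]" "L # replicate q L @ [S]"] q by simp
  then have "isfac p (replicate p L @ [S] @ replicate p L @ [S])" using isfac_phi'[OF p1] by simp
  then have "isfac p [S, L]"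
    using isfac_sub[of p "replicate p L" "[S, L]" "L # L # replicate q L @ [S]"] q by simp
  then have "isfac p ([M] @ replicate p L @ [S])" using isfac_phi'[OF p1] by simp
  then have "isfac p (M # replicate p L)" using isfac_sub[of p "[]" "M # replicate p L" "[S]"] by simp
  then have F: "isfac p (phi_word p (M # replicate p L))" using isfac_phi[OF p1] by blast
  have A: "phi_word p (M # replicate p L) = (replicate (p - 1) L @ [S]) @ concat (replicate p (replicate p L @ [S]))"
    by (simp only: phi_word_simps phi_word_repL phi.simps)
  have B: "replicate p (replicate p L @ [S]) = replicate (p - 1) (replicate p L @ [S]) @ [replicate p L @ [S]]"
    using q by (simp add: replicate_append_same[symmetric])
  have C: "replicate p L @ [S] = replicate 3 L @ replicate q L @ [S]" using q by (simp add: numeral_3_eq_3)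
  have "phi_word p (M # replicate p L) = replicate (p - 1) L @ [S] @ concat (replicate (p - 1) (replicate p L @ [S])) @ (replicate p L @ [S])"
    unfolding A B by simp
  also have "\<dots> = w1 p @ replicate q L @ [S]"
    unfolding w1_def C append_assoc ..
  finally have "isfac p (w1 p @ replicate q L @ [S])" using F by simp
  then show ?thesis using isfac_sub[of p "[]" "w1 p" "replicate q L @ [S]"] by simp
qed


lemma phi_iter_2_7_len: "length (phi_iter 2 7) = 409" by code_simp

lemma cnt1: "count_list (map ((!) (phi_iter 2 7)) [72..<109]) L = 22" by code_simp
lemma cnt2: "count_list (map ((!) (phi_iter 2 7)) [145..<182]) L = 19" by code_simp

lemma not_bal_2: "\<not> balanced 2 (u 2)"
proof
  assume B: "balanced 2 (u 2)"
  have ue: "u 2 x = phi_iter 2 7 ! x" if "x \<in> set [a..<b]" "b \<le> 409" for x a b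
    using that by (intro u_eq) (auto simp: phi_iter_2_7_len)
  have e1: "map (u 2) [72..<109] = map ((!) (phi_iter 2 7)) [72..<109]"
    by (rule map_cong[OF refl]) (rule ue, assumption, simp)
  have e2: "map (u 2) [145..<182] = map ((!) (phi_iter 2 7)) [145..<182]"
    by (rule map_cong[OF refl]) (rule ue, assumption, simp)
  have f1: "map (u 2) [72..<109] \<in> factors (u 2)"
    unfolding factors_def by (rule CollectI, rule exI[of _ 72], rule exI[of _ 37]) simp
  have f2: "map (u 2) [145..<182] \<in> factors (u 2)"
    unfolding factors_def by (rule CollectI, rule exI[of _ 145], rule exI[of _ 37]) simp
  have H: "\<And>a v x. v \<in> factors (u 2) \<Longrightarrow> x \<in> factors (u 2) \<Longrightarrow> length v = length x \<Longrightarrow>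
      \<bar>int (count_list v a) - int (count_list x a)\<bar> \<le> int 2"
    using B unfolding balanced_def by blast
  have "\<bar>int (count_list (map (u 2) [72..<109]) L) - int (count_list (map (u 2) [145..<182]) L)\<bar> \<le> int 2"
    by (rule H[OF f1 f2]) simp
  then show False unfolding e1 e2 cnt1 cnt2 by simp
qed

lemma count_w1: "p \<ge> 1 \<Longrightarrow> count_list (w1 p) L = (p - 1) + (p - 1) * p + 3"
  by (simp add: w1_def count_concat_rep count_list_replicate)
lemma count_w2: "p \<ge> 1 \<Longrightarrow> count_list (w2 p) L = (p - 1) + (p - 1) * p"
  by (simp add: w2_def count_concat_rep count_list_replicate)
lemma len_w12: "length (w1 p) = length (w2 p)"
  by (simp add: w1_def w2_def length_concat sum_list_replicate)

lemma isfac_factors: assumes "isfac p w" shows "w \<in> factors (u p)"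
proof -
  obtain i where "map (u p) [i..<i + length w] = w" using assms by (auto simp: isfac_def)
  then have "\<exists>i n. w = map (u p) [i..<i + n]" by metis
  then show ?thesis by (simp add: factors_def)
qed

lemma not_bal_ge3: assumes "p \<ge> 3" shows "\<not> balanced 2 (u p)"
proof
  assume B: "balanced 2 (u p)"
  have "w1 p \<in> factors (u p)" "w2 p \<in> factors (u p)"
    using isfac_factors isfac_w1[OF assms] isfac_w2[of p] assms by auto
  moreover have H: "\<And>a v x. v \<in> factors (u p) \<Longrightarrow> x \<in> factors (u p) \<Longrightarrow> length v = length x \<Longrightarrow>
      \<bar>int (count_list v a) - int (count_list x a)\<bar> \<le> int 2"
    using B unfolding balanced_def by blast
  ultimately have "\<bar>int (count_list (w1 p) L) - int (count_list (w2 p) L)\<bar> \<le> int 2"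
    using len_w12 by blast
  then show False using count_w1[of p] count_w2[of p] assms by simp
qed

lemma bal3: assumes "p > 1" shows "balanced 3 (u p)"
proof -
  consider "p = 2" | "p = 3" | "p = 4" | "p = 5" | "p = 6" | "p \<ge> 7" using assms by linarith
  then show ?thesis
  proof cases
    case 1 then show ?thesis using inv_sys_fin.balanced3[OF tab_sound[OF _ chk2]] by simp
  next
    case 2 then show ?thesis using inv_sys_fin.balanced3[OF tab_sound[OF _ chk3]] by simp
  next
    case 3 then show ?thesis using inv_sys_fin.balanced3[OF tab_sound[OF _ chk4]] by simp
  next
    case 4 then show ?thesis using inv_sys_fin.balanced3[OF tab_sound[OF _ chk5]] by simp
  next
    case 5 then show ?thesis using inv_sys_fin.balanced3[OF tab_sound[OF _ chk6]] by simp
  next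
    case 6 then show ?thesis using inv_sys_fin.balanced3[OF I_sound[OF 6]] by simp
  qed
qed

theorem corollary2p2:
  fixes p :: nat
  assumes "p > 1"
  shows "balanced 3 (u p) \<and> \<not> balanced 2 (u p)"
proof
  show "balanced 3 (u p)" using bal3[OF assms] .
  show "\<not> balanced 2 (u p)"
  proof (cases "p = 2")
    case True then show ?thesis using not_bal_2 by simp
  next
    case False then show ?thesis using not_bal_ge3 assms by simp
  qed
qed

end
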